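(* Let $f:2^V\to\mathbb{Z}_{\ge0}$ be a connectivity function, $T$ a branch decomposition of $f$, $r=uv\in E(T)$, $(r,C_1,C_2,C_3)$ a global $T$-improvement, $R$ the edit set of $(r,C_1,C_2,C_3)$, and $T'$ the refinement of $T$ with $(r,C_1,C_2,C_3)$. Then (1) every node in $R$ has degree 3 in $T$; (2) the nodes of $R$ induce a connected subtree of $T$; and (3) there exists an edge $r'\in E(T')$ such that for every $w\in V(T)\setminus R$ there is a node $w'\in V(T')$ with $T_r[w]=T'_{r'}[w']$.
   Context: A connectivity function $f:2^V\to\mathbb{Z}_{\ge0}$ ($V$ finite) satisfies $f(\emptyset)=0$, $f(X)=f(V\setminus X)$, and $f(X\cup Y)+f(X\cap Y)\le f(X)+f(Y)$. A branch decomposition of $f$ is a tree $T$ whose nodes have degree 1 or 3 with a bijection $L$ from $V$ to its leaves; elements of $V$ are identified with leaves. $T[uv]$ is the set of leaves closer to $u$ than to $v$. For an edge $r$ and node $w$, the $r$-subtree of $w$ is the set of nodes $x$ such that $w$ lies on the unique path from $x$ to the edge $r$ (including $w$), and $T_r[w]$ is the set of leaves in it. For $W\subseteq V$, a $W$-improvement is a tripartition $(C_1,C_2,C_3)$ of $V$ (pairwise disjoint, possibly empty, union $V$) with $f(C_i)<f(W)/2$, $f(C_i\cap W)<f(W)$, $f(C_i\cap(V\setminus W))<f(W)$ for each $i$; width $\max_i f(C_i)$, sum-width $\sum_i f(C_i)$, arity = number of nonempty parts; it is minimum if of minimum width, subject to that minimum arity, subject to those minimum sum-width. For $r=uv$ and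 $W=T[uv]$, a $T$-improvement on $r$ is $(r,C_1,C_2,C_3)$ with $(C_1,C_2,C_3)$ a minimum $W$-improvement; it intersects node $w$ if $T_r[w]$ meets at least two of the $C_i$; it is a global $T$-improvement if it intersects the minimum number of nodes among all $T$-improvements on $r$. The edit set of $(r,C_1,C_2,C_3)$ is the set of nodes $w$ such that $T_r[w]$ intersects at least two of $C_1,C_2,C_3$. The refinement of $(T,L)$ with $(uv,C_1,C_2,C_3)$: for each $i$ take a copy $T_i$ of $T$ with labeling restricted to $C_i$, subdivide the copy $u_iv_i$ of $uv$ with a new node $w_i$, take the disjoint union of $T_1,T_2,T_3$, add a new node $t$ adjacent to $w_1,w_2,w_3$, and then repeatedly delete unlabeled degree-1 nodes and suppress degree-2 nodes. For the refinement $T'$ and an edge $r'$ of it, $T'_{r'}[w']$ is defined analogously. *)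

theory Defs
  imports Main "HOL.Real"
begin

definition adj :: "'n set set \<Rightarrow> 'n \<Rightarrow> 'n \<Rightarrow> bool" where
  "adj E x y \<longleftrightarrow> {x, y} \<in> E \<and> x \<noteq> y"

definition nbrs :: "'n set set \<Rightarrow> 'n \<Rightarrow> 'n set" where
  "nbrs E x = {y. adj E x y}"

definition degree :: "'n set set \<Rightarrow> 'n \<Rightarrow> nat" where
  "degree E x = card (nbrs E x)"

definition is_path :: "'n set set \<Rightarrow> 'n list \<Rightarrow> bool" where
  "is_path E p \<longleftrightarrow> p \<noteq> [] \<and> distinct p \<and>
     (\<forall>i. Suc i < length p \<longrightarrow> adj E (p ! i) (p ! Suc i))"

definition path_betw :: "'n set set \<Rightarrow> 'n list \<Rightarrow> 'n \<Rightarrow> 'n \<Rightarrow> bool" where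
  "path_betw E p x y \<longleftrightarrow> is_path E p \<and> hd p = x \<and> last p = y"

definition is_cycle :: "'n set set \<Rightarrow> 'n list \<Rightarrow> bool" where
  "is_cycle E p \<longleftrightarrow> 3 \<le> length p \<and> is_path E p \<and> adj E (last p) (hd p)"

definition is_graph :: "'n set \<Rightarrow> 'n set set \<Rightarrow> bool" where
  "is_graph N E \<longleftrightarrow> finite N \<and> (\<forall>e\<in>E. \<exists>x y. e = {x, y} \<and> x \<noteq> y \<and> x \<in> N \<and> y \<in> N)"

definition is_tree :: "'n set \<Rightarrow> 'n set set \<Rightarrow> bool" where
  "is_tree N E \<longleftrightarrow> is_graph N E \<and> N \<noteq> {} \<and>
     (\<forall>x\<in>N. \<forall>y\<in>N. \<exists>p. path_betw E p x y) \<and> \<not> (\<exists>p. is_cycle E p)"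

definition connectivity_function :: "'v set \<Rightarrow> ('v set \<Rightarrow> nat) \<Rightarrow> bool" where
  "connectivity_function V f \<longleftrightarrow> f {} = 0 \<and> (\<forall>X. X \<subseteq> V \<longrightarrow> f X = f (V - X)) \<and>
     (\<forall>X Y. X \<subseteq> V \<longrightarrow> Y \<subseteq> V \<longrightarrow> f (X \<union> Y) + f (X \<inter> Y) \<le> f X + f Y)"

definition branch_decomposition :: "'v set \<Rightarrow> 'n set \<Rightarrow> 'n set set \<Rightarrow> ('v \<Rightarrow> 'n) \<Rightarrow> bool" where
  "branch_decomposition V N E L \<longleftrightarrow> is_tree N E \<and>
     (\<forall>x\<in>N. degree E x = 1 \<or> degree E x = 3) \<and>
     bij_betw L V {x \<in> N. degree E x = 1}"

definition closer_leaves :: "'n set set \<Rightarrow> ('v \<Rightarrow> 'n) \<Rightarrow> 'v set \<Rightarrow> 'n \<Rightarrow> 'n \<Rightarrow> 'v set" where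
  "closer_leaves E L V u v = {e \<in> V. \<exists>p. path_betw E p (L e) u \<and>
       (\<forall>q. path_betw E q (L e) v \<longrightarrow> length p < length q)}"

definition path_to_edge :: "'n set set \<Rightarrow> 'n list \<Rightarrow> 'n \<Rightarrow> 'n set \<Rightarrow> bool" where
  "path_to_edge E p x r \<longleftrightarrow> is_path E p \<and> hd p = x \<and> last p \<in> r \<and>
     (\<forall>y \<in> set (butlast p). y \<notin> r)"

definition r_subtree :: "'n set \<Rightarrow> 'n set set \<Rightarrow> 'n set \<Rightarrow> 'n \<Rightarrow> 'n set" where
  "r_subtree N E r w = {x \<in> N. \<exists>p. path_to_edge E p x r \<and> w \<in> set p}"

text \<open>T_r[w]: the leaves (elements of V) in the r-subtree of w.\<close>
definition subtree_leaves :: "'n set \<Rightarrow> 'n set set \<Rightarrow> ('v \<Rightarrow> 'n) \<Rightarrow> 'v set \<Rightarrow> 'n set \<Rightarrow> 'n \<Rightarrow> 'v set" where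
  "subtree_leaves N E L V r w = {e \<in> V. L e \<in> r_subtree N E r w}"

definition improvement :: "'v set \<Rightarrow> ('v set \<Rightarrow> nat) \<Rightarrow> 'v set \<Rightarrow> 'v set \<Rightarrow> 'v set \<Rightarrow> 'v set \<Rightarrow> bool" where
  "improvement V f W C1 C2 C3 \<longleftrightarrow>
     C1 \<inter> C2 = {} \<and> C1 \<inter> C3 = {} \<and> C2 \<inter> C3 = {} \<and> C1 \<union> C2 \<union> C3 = V \<and>
     (\<forall>C \<in> {C1, C2, C3}. real (f C) < real (f W) / 2 \<and>
        f (C \<inter> W) < f W \<and> f (C \<inter> (V - W)) < f W)"

definition width :: "('v set \<Rightarrow> nat) \<Rightarrow> 'v set \<Rightarrow> 'v set \<Rightarrow> 'v set \<Rightarrow> nat" where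
  "width f C1 C2 C3 = max (f C1) (max (f C2) (f C3))"

definition sum_width :: "('v set \<Rightarrow> nat) \<Rightarrow> 'v set \<Rightarrow> 'v set \<Rightarrow> 'v set \<Rightarrow> nat" where
  "sum_width f C1 C2 C3 = f C1 + f C2 + f C3"

definition arity :: "'v set \<Rightarrow> 'v set \<Rightarrow> 'v set \<Rightarrow> nat" where
  "arity C1 C2 C3 = length (filter (\<lambda>C. C \<noteq> {}) [C1, C2, C3])"

definition min_improvement :: "'v set \<Rightarrow> ('v set \<Rightarrow> nat) \<Rightarrow> 'v set \<Rightarrow> 'v set \<Rightarrow> 'v set \<Rightarrow> 'v set \<Rightarrow> bool" where
  "min_improvement V f W C1 C2 C3 \<longleftrightarrow> improvement V f W C1 C2 C3 \<and>
     (\<forall>D1 D2 D3. improvement V f W D1 D2 D3 \<longrightarrow>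
        width f C1 C2 C3 < width f D1 D2 D3 \<or>
        (width f C1 C2 C3 = width f D1 D2 D3 \<and>
          (arity C1 C2 C3 < arity D1 D2 D3 \<or>
           (arity C1 C2 C3 = arity D1 D2 D3 \<and> sum_width f C1 C2 C3 \<le> sum_width f D1 D2 D3))))"

definition T_improvement :: "'v set \<Rightarrow> ('v set \<Rightarrow> nat) \<Rightarrow> 'n set set \<Rightarrow> ('v \<Rightarrow> 'n) \<Rightarrow>
    'n \<Rightarrow> 'n \<Rightarrow> 'v set \<Rightarrow> 'v set \<Rightarrow> 'v set \<Rightarrow> bool" where
  "T_improvement V f E L u v C1 C2 C3 \<longleftrightarrow> {u, v} \<in> E \<and> u \<noteq> v \<and>
     min_improvement V f (closer_leaves E L V u v) C1 C2 C3"

text \<open>Edit set: nodes w such that T_r[w] intersects at least two of C1, C2, C3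
  (equivalently: the nodes intersected by the improvement).\<close>
definition edit_set :: "'v set \<Rightarrow> 'n set \<Rightarrow> 'n set set \<Rightarrow> ('v \<Rightarrow> 'n) \<Rightarrow> 'n set \<Rightarrow>
    'v set \<Rightarrow> 'v set \<Rightarrow> 'v set \<Rightarrow> 'n set" where
  "edit_set V N E L r C1 C2 C3 = {w \<in> N.
     let S = subtree_leaves N E L V r w in
       (S \<inter> C1 \<noteq> {} \<and> S \<inter> C2 \<noteq> {}) \<or> (S \<inter> C1 \<noteq> {} \<and> S \<inter> C3 \<noteq> {}) \<or>
       (S \<inter> C2 \<noteq> {} \<and> S \<inter> C3 \<noteq> {})}"

definition global_T_improvement :: "'v set \<Rightarrow> ('v set \<Rightarrow> nat) \<Rightarrow> 'n set \<Rightarrow> 'n set set \<Rightarrow>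
    ('v \<Rightarrow> 'n) \<Rightarrow> 'n \<Rightarrow> 'n \<Rightarrow> 'v set \<Rightarrow> 'v set \<Rightarrow> 'v set \<Rightarrow> bool" where
  "global_T_improvement V f N E L u v C1 C2 C3 \<longleftrightarrow> T_improvement V f E L u v C1 C2 C3 \<and>
     (\<forall>D1 D2 D3. T_improvement V f E L u v D1 D2 D3 \<longrightarrow>
        card (edit_set V N E L {u, v} C1 C2 C3) \<le> card (edit_set V N E L {u, v} D1 D2 D3))"

text \<open>Nodes of the refined tree: Cp i x is the copy of x in T_i, Sub i is w_i, Ctr is t.\<close>
datatype 'n rnode = Cp nat 'n | Sub nat | Ctr

definition init_nodes :: "'n set \<Rightarrow> 'n rnode set" where
  "init_nodes N = {Cp i x | i x. i \<in> {1, 2, 3} \<and> x \<in> N} \<union> {Sub i | i. i \<in> {1, 2, 3}} \<union> {Ctr}"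

definition init_edges :: "'n set set \<Rightarrow> 'n \<Rightarrow> 'n \<Rightarrow> 'n rnode set set" where
  "init_edges E u v =
     {{Cp i x, Cp i y} | i x y. i \<in> {1, 2, 3} \<and> {x, y} \<in> E \<and> {x, y} \<noteq> {u, v}} \<union>
     {{Cp i u, Sub i} | i. i \<in> {1, 2, 3}} \<union> {{Sub i, Cp i v} | i. i \<in> {1, 2, 3}} \<union>
     {{Sub i, Ctr} | i. i \<in> {1, 2, 3}}"

definition ref_label :: "('v \<Rightarrow> 'n) \<Rightarrow> 'v set \<Rightarrow> 'v set \<Rightarrow> 'v set \<Rightarrow> 'v \<Rightarrow> 'n rnode" where
  "ref_label L C1 C2 C3 e =
     (if e \<in> C1 then Cp 1 (L e) else if e \<in> C2 then Cp 2 (L e) else Cp 3 (L e))"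

inductive reduce_step :: "'a set \<Rightarrow> ('a set \<times> 'a set set) \<Rightarrow> ('a set \<times> 'a set set) \<Rightarrow> bool"
  for Lab :: "'a set" where
  delete: "x \<in> N \<Longrightarrow> x \<notin> Lab \<Longrightarrow> degree E x = 1 \<Longrightarrow>
     reduce_step Lab (N, E) (N - {x}, {e \<in> E. x \<notin> e})"
| suppress: "x \<in> N \<Longrightarrow> nbrs E x = {a, b} \<Longrightarrow> a \<noteq> b \<Longrightarrow>
     reduce_step Lab (N, E) (N - {x}, {e \<in> E. x \<notin> e} \<union> {{a, b}})"

definition reduced :: "'a set \<Rightarrow> 'a set \<Rightarrow> 'a set set \<Rightarrow> bool" where
  "reduced Lab N E \<longleftrightarrow> \<not> (\<exists>x\<in>N. x \<notin> Lab \<and> degree E x = 1) \<and> \<not> (\<exists>x\<in>N. degree E x = 2)"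

definition refinement :: "'v set \<Rightarrow> 'n set \<Rightarrow> 'n set set \<Rightarrow> ('v \<Rightarrow> 'n) \<Rightarrow> 'n \<Rightarrow> 'n \<Rightarrow>
    'v set \<Rightarrow> 'v set \<Rightarrow> 'v set \<Rightarrow> 'n rnode set \<Rightarrow> 'n rnode set set \<Rightarrow> bool" where
  "refinement V N E L u v C1 C2 C3 N' E' \<longleftrightarrow>
     (let Lab = ref_label L C1 C2 C3 ` V in
       (reduce_step Lab)\<^sup>*\<^sup>* (init_nodes N, init_edges E u v) (N', E') \<and> reduced Lab N' E')"

end

theory Submission
  imports Defs
begin


definition reachIn :: "'n set set \<Rightarrow> 'n set \<Rightarrow> 'n \<Rightarrow> 'n \<Rightarrow> bool" where
  "reachIn E S = (\<lambda>s t. adj E s t \<and> s \<in> S \<and> t \<in> S)\<^sup>*\<^sup>*"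

definition acyc :: "'n set set \<Rightarrow> bool" where
  "acyc E \<longleftrightarrow> (\<forall>a b. {a,b} \<in> E \<longrightarrow> a \<noteq> b \<longrightarrow> \<not> reachIn (E - {{a,b}}) UNIV a b)"

lemma adj_sym: "adj E x y \<Longrightarrow> adj E y x"
  by (auto simp: adj_def insert_commute)

lemma adj_mono: "adj E x y \<Longrightarrow> E \<subseteq> E' \<Longrightarrow> adj E' x y"
  by (auto simp: adj_def)

lemma reachIn_refl[simp]: "reachIn E S x x"
  by (simp add: reachIn_def)

lemma reachIn_edge: "adj E x y \<Longrightarrow> x \<in> S \<Longrightarrow> y \<in> S \<Longrightarrow> reachIn E S x y"
  unfolding reachIn_def by (rule r_into_rtranclp) simp

lemma reachIn_trans: "reachIn E S x y \<Longrightarrow> reachIn E S y z \<Longrightarrow> reachIn E S x z"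
  unfolding reachIn_def by simp

lemma reachIn_induct[consumes 1, case_names base step]:
  assumes "reachIn E S a b" "P a"
    and "\<And>y z. reachIn E S a y \<Longrightarrow> adj E y z \<Longrightarrow> y \<in> S \<Longrightarrow> z \<in> S \<Longrightarrow> P y \<Longrightarrow> P z"
  shows "P b"
  using assms(1) unfolding reachIn_def
proof (induction rule: rtranclp_induct)
  case base then show ?case using assms(2) by simp
next
  case (step y z) then show ?case using assms(3)[of y z] unfolding reachIn_def by auto
qed

lemma reachIn_sym: "reachIn E S x y \<Longrightarrow> reachIn E S y x"
  unfolding reachIn_def
proof (induction rule: rtranclp_induct)
  case base then show ?case by simp
next
  case (step y z)
  then show ?case by (metis (mono_tags, lifting) adj_sym converse_rtranclp_into_rtranclp)
qed

lemma reachIn_map: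
  assumes "reachIn E S p q"
    and "\<And>s t. adj E s t \<Longrightarrow> s \<in> S \<Longrightarrow> t \<in> S \<Longrightarrow> reachIn E2 S2 (g s) (g t)"
  shows "reachIn E2 S2 (g p) (g q)"
  using assms(1) unfolding reachIn_def
proof (induction rule: rtranclp_induct)
  case base then show ?case by simp
next
  case (step y z)
  then show ?case using assms(2)[of y z] unfolding reachIn_def by auto
qed

lemma reachIn_mono: "reachIn E S p q \<Longrightarrow> E \<subseteq> E' \<Longrightarrow> S \<subseteq> S' \<Longrightarrow> reachIn E' S' p q"
  using reachIn_map[of E S p q E' S' id]
  by (auto intro: reachIn_edge adj_mono)

lemma reachIn_ends: "reachIn E S p q \<Longrightarrow> p \<noteq> q \<Longrightarrow> p \<in> S \<and> q \<in> S"
  unfolding reachIn_def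
  by (metis (mono_tags, lifting) converse_rtranclpE rtranclp.cases)

lemma reachIn_closed:
  assumes "reachIn E S p q" "p \<in> A"
    and "\<And>s t. adj E s t \<Longrightarrow> s \<in> S \<Longrightarrow> t \<in> S \<Longrightarrow> s \<in> A \<Longrightarrow> t \<in> A"
  shows "q \<in> A"
  using assms(1,2) unfolding reachIn_def
proof (induction rule: rtranclp_induct)
  case base then show ?case by simp
next
  case (step y z)
  then show ?case using assms(3) by blast
qed

lemma is_path_single[simp]: "is_path E [x]"
  by (simp add: is_path_def)

lemma is_path_Cons:
  "is_path E (x # y # p) \<longleftrightarrow> adj E x y \<and> x \<notin> set (y # p) \<and> is_path E (y # p)"
proof
  assume a: "is_path E (x # y # p)"
  then have "adj E x y" unfolding is_path_def by (metis length_Cons nth_Cons_0 nth_Cons_Suc zero_less_Suc Suc_less_eq)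
  moreover have "\<forall>i. Suc i < length (y # p) \<longrightarrow> adj E ((y # p) ! i) ((y # p) ! Suc i)"
  proof (intro allI impI)
    fix i assume "Suc i < length (y # p)"
    then have "Suc (Suc i) < length (x # y # p)" by simp
    then show "adj E ((y # p) ! i) ((y # p) ! Suc i)" using a unfolding is_path_def
      by (metis nth_Cons_Suc)
  qed
  ultimately show "adj E x y \<and> x \<notin> set (y # p) \<and> is_path E (y # p)"
    using a unfolding is_path_def by auto
next
  assume a: "adj E x y \<and> x \<notin> set (y # p) \<and> is_path E (y # p)"
  show "is_path E (x # y # p)" unfolding is_path_def
  proof (intro conjI allI impI)
    show "x # y # p \<noteq> []" by simp
    show "distinct (x # y # p)" using a unfolding is_path_def by auto
    fix i assume i: "Suc i < length (x # y # p)"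
    show "adj E ((x # y # p) ! i) ((x # y # p) ! Suc i)"
    proof (cases i)
      case 0 then show ?thesis using a by simp
    next
      case (Suc j)
      then show ?thesis using a i unfolding is_path_def by auto
    qed
  qed
qed

lemma is_path_Cons_tl: "is_path E (x # p) \<Longrightarrow> p \<noteq> [] \<Longrightarrow> is_path E p"
  by (cases p) (auto simp: is_path_Cons)

lemma is_path_nonempty: "is_path E p \<Longrightarrow> p \<noteq> []"
  by (simp add: is_path_def)

lemma is_path_mono: "is_path E p \<Longrightarrow> E \<subseteq> E' \<Longrightarrow> is_path E' p"
  unfolding is_path_def by (auto intro: adj_mono)

lemma is_path_append_right: "is_path E (ys @ zs) \<Longrightarrow> zs \<noteq> [] \<Longrightarrow> is_path E zs"
proof (induction ys)
  case Nil then show ?case by simp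
next
  case (Cons a ys)
  then show ?case by (metis append_Cons append_is_Nil_conv is_path_Cons_tl)
qed

lemma is_path_snoc:
  "is_path E p \<Longrightarrow> b \<notin> set p \<Longrightarrow> adj E (last p) b \<Longrightarrow> is_path E (p @ [b])"
proof (induction p)
  case Nil then show ?case by (simp add: is_path_def)
next
  case (Cons a p)
  show ?case
  proof (cases p)
    case Nil then show ?thesis using Cons by (simp add: is_path_Cons)
  next
    case (Cons c q)
    then show ?thesis using Cons.prems Cons.IH is_path_Cons[of E a c q] is_path_Cons[of E a c "q @ [b]"]
      by auto
  qed
qed

lemma path_reach: "is_path E p \<Longrightarrow> reachIn E (set p) (hd p) (last p)"
proof (induction p)
  case Nil then show ?case by (simp add: is_path_def)
next
  case (Cons a p)
  show ?case
  proof (cases p)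
    case Nil then show ?thesis by simp
  next
    case (Cons c q)
    then have "reachIn E (set p) c (last p)" using Cons.IH Cons.prems is_path_Cons_tl by fastforce
    then have "reachIn E (set (a # p)) c (last p)" by (rule reachIn_mono) auto
    moreover have "reachIn E (set (a # p)) a c" using Cons.prems Cons
      by (intro reachIn_edge) (auto simp: is_path_Cons)
    ultimately show ?thesis using Cons by (auto intro: reachIn_trans)
  qed
qed

lemma reach_path:
  assumes "reachIn E S x z" "x \<in> S"
  shows "\<exists>p. path_betw E p x z \<and> set p \<subseteq> S"
proof -
  have "reachIn E S x z \<Longrightarrow> x \<in> S \<Longrightarrow> \<exists>p. path_betw E p x z \<and> set p \<subseteq> S"
    unfolding reachIn_def
  proof (induction rule: converse_rtranclp_induct)
    case base then show ?case by (intro exI[of _ "[z]"]) (simp add: path_betw_def)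
  next
    case (step x s)
    then obtain p where p: "path_betw E p s z" "set p \<subseteq> S" by auto
    show ?case
    proof (cases "x \<in> set p")
      case True
      then obtain ys zs where pp: "p = ys @ x # zs" by (meson split_list)
      then have "is_path E (x # zs)" using p is_path_append_right unfolding path_betw_def by blast
      then show ?thesis using p pp unfolding path_betw_def by (intro exI[of _ "x # zs"]) auto
    next
      case False
      obtain c q where pq: "p = c # q" using p unfolding path_betw_def is_path_def by (cases p) auto
      have "c = s" using p pq unfolding path_betw_def by simp
      then have "is_path E (x # p)" using p pq False step unfolding path_betw_def by (auto simp: is_path_Cons)
      then show ?thesis using p pq step False unfolding path_betw_def
        by (intro exI[of _ "x # p"]) auto
    qed
  qed
  then show ?thesis using assms by blast
qed


lemma reachIn_remove_edge:
  assumes "reachIn E (-{x}) s t" "x \<in> e"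
  shows "reachIn (E - {e}) UNIV s t"
proof -
  have "reachIn (E - {e}) UNIV (id s') (id t')" if "adj E s' t'" "s' \<in> -{x}" "t' \<in> -{x}" for s' t'
  proof -
    have "{s', t'} \<noteq> e" using that assms(2) by auto
    then show ?thesis using that by (intro reachIn_edge) (auto simp: adj_def)
  qed
  from reachIn_map[OF assms(1) this] show ?thesis by simp
qed

lemma acyc_contra:
  assumes "acyc E" "adj E x a" "reachIn E (-{x}) a b" "adj E b x" "b \<noteq> a"
  shows False
proof -
  have "reachIn (E - {{x,a}}) UNIV a b" using reachIn_remove_edge[OF assms(3)] by simp
  moreover have "adj (E - {{x,a}}) b x" using assms(4,5) by (auto simp: adj_def doubleton_eq_iff)
  ultimately have "reachIn (E - {{x,a}}) UNIV a x" by (meson UNIV_I reachIn_edge reachIn_trans)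
  then have "reachIn (E - {{x,a}}) UNIV x a" by (rule reachIn_sym)
  then show False using assms(1,2) unfolding acyc_def adj_def by blast
qed

lemma path_last_in: "is_path E p \<Longrightarrow> last p \<in> set p"
  using is_path_nonempty last_in_set by blast

lemma distinct_hd_last: "distinct (a # b # q) \<Longrightarrow> a \<noteq> last (a # b # q)"
proof -
  assume "distinct (a # b # q)"
  moreover have "last (a # b # q) \<in> set (b # q)" by (metis last.simps last_in_set list.distinct(1))
  ultimately show ?thesis by auto
qed

lemma path_unique:
  assumes "acyc E"
  shows "is_path E p \<Longrightarrow> is_path E q \<Longrightarrow> hd p = hd q \<Longrightarrow> last p = last q \<Longrightarrow> p = q"
proof (induction p arbitrary: q)
  case Nil then show ?case by (simp add: is_path_def)
next
  case (Cons x p)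
  show ?case
  proof (cases p)
    case Nil
    show ?thesis
    proof (cases q)
      case Nil then show ?thesis using Cons.prems by (simp add: is_path_def)
    next
      case (Cons y q1)
      show ?thesis
      proof (cases q1)
        case Nil then show ?thesis using Cons \<open>q = y # q1\<close> Cons.prems \<open>p = []\<close> by simp
      next
        case (Cons b q')
        then have "y \<noteq> last q" using \<open>q = y # q1\<close> Cons.prems(2) distinct_hd_last[of y b q']
          unfolding is_path_def by simp
        then show ?thesis using Cons.prems \<open>p = []\<close> \<open>q = y # q1\<close> by simp
      qed
    qed
  next
    case (Cons a p')
    have "x \<noteq> last (x # p)" using Cons Cons.prems(1) distinct_hd_last[of x a p']
      unfolding is_path_def by simp
    obtain b q' where q: "q = x # b # q'" using Cons.prems \<open>x \<noteq> last (x # p)\<close>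
      by (cases q; cases "tl q") (auto simp: is_path_def)
    have pa: "is_path E (a # p')" "adj E x a" "x \<notin> set (a # p')"
      using Cons.prems(1) Cons by (auto simp: is_path_Cons)
    have qb: "is_path E (b # q')" "adj E x b" "x \<notin> set (b # q')"
      using Cons.prems(2) q by (auto simp: is_path_Cons)
    show ?thesis
    proof (cases "a = b")
      case True
      then have "p = b # q'" using Cons.IH[of "b # q'"] Cons.prems pa qb q Cons by simp
      then show ?thesis using q True by simp
    next
      case False
      have "reachIn E (-{x}) a (last (a # p'))"
        using path_reach[OF pa(1)] pa(3) by (auto elim!: reachIn_mono)
      moreover have "reachIn E (-{x}) b (last (b # q'))"
        using path_reach[OF qb(1)] qb(3) by (auto elim!: reachIn_mono)
      moreover have "last (a # p') = last (b # q')" using Cons.prems(4) Cons q by simp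
      ultimately have "reachIn E (-{x}) a b" by (metis reachIn_sym reachIn_trans)
      then show ?thesis using acyc_contra[OF assms pa(2) _ adj_sym[OF qb(2)]] False by blast
    qed
  qed
qed

lemma path_to_edge_exists:
  "is_path E p \<Longrightarrow> last p \<in> r \<Longrightarrow> \<exists>q. path_to_edge E q (hd p) r \<and> set q \<subseteq> set p"
proof (induction p)
  case Nil then show ?case by (simp add: is_path_def)
next
  case (Cons x p)
  show ?case
  proof (cases "x \<in> r \<or> p = []")
    case True
    then show ?thesis using Cons.prems
      by (intro exI[of _ "[x]"]) (auto simp: path_to_edge_def)
  next
    case False
    then obtain c p' where p: "p = c # p'" by (cases p) auto
    have pp: "is_path E p" "adj E x c" "x \<notin> set p" using Cons.prems p by (auto simp: is_path_Cons)
    obtain q where q: "path_to_edge E q (hd p) r" "set q \<subseteq> set p"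
      using Cons.IH pp Cons.prems p by auto
    obtain d q' where qq: "q = d # q'" using q unfolding path_to_edge_def is_path_def by (cases q) auto
    have "d = c" using q qq p unfolding path_to_edge_def by simp
    then have "is_path E (x # q)" using q qq pp unfolding path_to_edge_def by (auto simp: is_path_Cons)
    moreover have "last (x # q) \<in> r" using q qq unfolding path_to_edge_def by (metis last_ConsR list.distinct(1))
    moreover have "\<forall>y\<in>set (butlast (x # q)). y \<notin> r"
      using q qq False unfolding path_to_edge_def by auto
    ultimately show ?thesis using q by (intro exI[of _ "x # q"]) (auto simp: path_to_edge_def)
  qed
qed

lemma pte_unique:
  assumes "acyc E" "adj E a b" "path_to_edge E p x {a, b}" "path_to_edge E q x {a, b}"
  shows "p = q"
proof -
  have P: "is_path E p" "hd p = x" "last p \<in> {a,b}" "\<forall>y\<in>set (butlast p). y \<notin> {a,b}"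
    and Q: "is_path E q" "hd q = x" "last q \<in> {a,b}" "\<forall>y\<in>set (butlast q). y \<notin> {a,b}"
    using assms(3,4) unfolding path_to_edge_def by auto
  have gen: False if P: "is_path E p" "hd p = x" "last p = c" "\<forall>y\<in>set (butlast p). y \<notin> {c,d}"
    and Q: "is_path E q" "hd q = x" "last q = d" "\<forall>y\<in>set (butlast q). y \<notin> {c,d}"
    and cd: "adj E c d" for p q c d
  proof -
    have ne: "p \<noteq> []" using P is_path_nonempty by auto
    have "d \<notin> set p"
    proof
      assume "d \<in> set p"
      then have "d \<in> set (butlast p) \<or> d = last p" using ne
        by (metis append_butlast_last_id rotate1.simps(2) set_ConsD set_rotate1)
      then show False using P cd by (auto simp: adj_def)
    qed
    then have "is_path E (p @ [d])" using is_path_snoc[OF P(1)] P(3) cd by simp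
    then have "p @ [d] = q" using path_unique[OF assms(1)] Q P ne by auto
    then have "c \<in> set (butlast q)" using P(3) ne by auto
    then show False using Q(4) by auto
  qed
  show ?thesis
  proof (cases "last p = last q")
    case True then show ?thesis using path_unique[OF assms(1) P(1) Q(1)] P Q by simp
  next
    case False
    then have "(last p = a \<and> last q = b) \<or> (last p = b \<and> last q = a)" using P Q by auto
    then show ?thesis
    proof
      assume h: "last p = a \<and> last q = b"
      show ?thesis using gen[where p=p and c=a and q=q and d=b] P Q h assms(2) by auto
    next
      assume h: "last p = b \<and> last q = a"
      show ?thesis using gen[where p=p and c=b and q=q and d=a] P Q h adj_sym[OF assms(2)] by (auto simp: insert_commute)
    qed
  qed
qed


definition conn :: "'n set \<Rightarrow> 'n set set \<Rightarrow> bool" where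
  "conn N E \<longleftrightarrow> (\<forall>a\<in>N. \<forall>b\<in>N. reachIn E UNIV a b)"

lemma graph_adjD: "is_graph N E \<Longrightarrow> adj E x y \<Longrightarrow> x \<in> N \<and> y \<in> N"
  unfolding is_graph_def adj_def by (metis doubleton_eq_iff)

lemma reach_in_N: "is_graph N E \<Longrightarrow> reachIn E S x z \<Longrightarrow> x \<in> N \<Longrightarrow> z \<in> N"
  by (erule reachIn_closed) (auto dest: graph_adjD)

lemma nbrs_sub: "is_graph N E \<Longrightarrow> nbrs E x \<subseteq> N"
  unfolding nbrs_def by (auto dest: graph_adjD)

lemma nbrs_finite: "is_graph N E \<Longrightarrow> finite (nbrs E x)"
  using nbrs_sub is_graph_def finite_subset by metis

lemma pte_exists:
  assumes "conn N E" "x \<in> N" "c \<in> N" "c \<in> r"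
  shows "\<exists>p. path_to_edge E p x r"
proof -
  obtain p where "path_betw E p x c" using reach_path[of E UNIV x c] assms unfolding conn_def by auto
  then show ?thesis using path_to_edge_exists[of E p r] assms unfolding path_betw_def by auto
qed

lemma r_subtree_char:
  assumes G: "is_graph N E" and A: "acyc E" and C: "conn N E" and r: "{c,d} \<in> E" "c \<noteq> d"
    and y: "y \<in> N" "c \<noteq> y"
  shows "r_subtree N E {c,d} y = {x \<in> N. x = y \<or> \<not> reachIn E (-{y}) x c}"
proof -
  have cd: "adj E c d" using r by (simp add: adj_def)
  have cN: "c \<in> N" "d \<in> N" using graph_adjD[OF G cd] by auto
  show ?thesis
  proof (intro equalityI subsetI)
    fix x assume "x \<in> r_subtree N E {c,d} y"
    then obtain p where x: "x \<in> N" and p: "path_to_edge E p x {c,d}" "y \<in> set p"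
      unfolding r_subtree_def by auto
    have "x = y \<or> \<not> reachIn E (-{y}) x c"
    proof (rule ccontr)
      assume "\<not> (x = y \<or> \<not> reachIn E (-{y}) x c)"
      then have h: "x \<noteq> y" "reachIn E (-{y}) x c" by auto
      obtain q where q: "path_betw E q x c" "set q \<subseteq> -{y}" using reach_path[OF h(2)] h(1) by auto
      obtain q' where q': "path_to_edge E q' x {c,d}" "set q' \<subseteq> set q"
        using path_to_edge_exists[of E q "{c,d}"] q unfolding path_betw_def by auto
      have "p = q'" using pte_unique[OF A cd p(1) q'(1)] .
      then show False using p(2) q q' by auto
    qed
    then show "x \<in> {x \<in> N. x = y \<or> \<not> reachIn E (-{y}) x c}" using x by auto
  next
    fix x assume x: "x \<in> {x \<in> N. x = y \<or> \<not> reachIn E (-{y}) x c}"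
    obtain p where p: "path_to_edge E p x {c,d}" using pte_exists[OF C, of x c "{c,d}"] x cN(1) by auto
    have "y \<in> set p"
    proof (rule ccontr)
      assume ny: "y \<notin> set p"
      have pp: "is_path E p" "hd p = x" "last p \<in> {c,d}" using p unfolding path_to_edge_def by auto
      have lp: "last p \<in> set p" using pp(1) by (rule path_last_in)
      have "reachIn E (-{y}) x (last p)" using path_reach[OF pp(1)] pp(2) ny
        by (auto elim!: reachIn_mono)
      moreover have "reachIn E (-{y}) (last p) c"
      proof (cases "last p = c")
        case False
        then have "last p = d" using pp by auto
        then show ?thesis using ny lp y adj_sym[OF cd] by (intro reachIn_edge) auto
      qed simp
      ultimately have "reachIn E (-{y}) x c" by (rule reachIn_trans)
      moreover have "x \<noteq> y" using ny pp is_path_nonempty by (metis list.set_sel(1))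
      ultimately show False using x by auto
    qed
    then show "x \<in> r_subtree N E {c,d} y" using x p unfolding r_subtree_def by auto
  qed
qed

lemma tree_acyc: assumes "is_tree N E" shows "acyc E"
  unfolding acyc_def
proof (intro allI impI notI)
  fix a b assume ab: "{a,b} \<in> E" "a \<noteq> b" and r: "reachIn (E - {{a,b}}) UNIV a b"
  obtain p where p: "path_betw (E - {{a,b}}) p a b" using reach_path[OF r] by auto
  obtain x y p' where pp: "p = x # y # p'"
    using p ab unfolding path_betw_def is_path_def by (cases p; cases "tl p") auto
  have x: "x = a" using p pp unfolding path_betw_def by simp
  have "p' \<noteq> []"
  proof
    assume "p' = []"
    then have "adj (E - {{a,b}}) a b" using p pp x unfolding path_betw_def by (auto simp: is_path_Cons)
    then show False by (auto simp: adj_def)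
  qed
  then have "3 \<le> length p" using pp by (cases p') auto
  moreover have "is_path E p" using p is_path_mono unfolding path_betw_def by blast
  moreover have "adj E (last p) (hd p)" using p ab unfolding path_betw_def
    by (auto simp: adj_def insert_commute)
  ultimately have "is_cycle E p" unfolding is_cycle_def by simp
  then show False using assms unfolding is_tree_def by blast
qed

lemma tree_conn: assumes "is_tree N E" shows "conn N E"
  unfolding conn_def
proof (intro ballI)
  fix a b assume "a \<in> N" "b \<in> N"
  then obtain p where "path_betw E p a b" using assms unfolding is_tree_def by blast
  then show "reachIn E UNIV a b" using path_reach[of E p] unfolding path_betw_def
    by (auto elim!: reachIn_mono)
qed

lemma leaf_avoid:
  assumes "nbrs E w = {a}" "reachIn E UNIV x z" "x \<noteq> w" "z \<noteq> w"
  shows "reachIn E (-{w}) x z"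
proof -
  have aw: "adj E w a" using assms(1) unfolding nbrs_def by auto
  then have "a \<noteq> w" by (auto simp: adj_def)
  define g where "g s = (if s = w then a else s)" for s
  have stp: "reachIn E (-{w}) (g s) (g t)" if "adj E s t" "s \<in> UNIV" "t \<in> UNIV" for s t
  proof -
    consider "s = w" | "t = w" | "s \<noteq> w" "t \<noteq> w" by auto
    then show ?thesis
    proof cases
      case 1
      then have "t = a" using assms(1) that unfolding nbrs_def by auto
      then show ?thesis using 1 g_def by simp
    next
      case 2
      then have "s = a" using assms(1) adj_sym[OF that(1)] unfolding nbrs_def by auto
      then show ?thesis using 2 g_def by simp
    next
      case 3 then show ?thesis using that(1) g_def by (auto intro: reachIn_edge)
    qed
  qed
  have "reachIn E (-{w}) (g x) (g z)" by (rule reachIn_map[OF assms(2) stp])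
  then show ?thesis using assms(3,4) g_def by simp
qed

lemma nbr_extract:
  assumes "reachIn E UNIV l y" "l \<noteq> y"
  shows "\<exists>n. adj E n y \<and> reachIn E (-{y}) l n"
proof -
  have "(t \<noteq> y \<and> reachIn E (-{y}) l t) \<or> (\<exists>n. adj E n y \<and> reachIn E (-{y}) l n)"
    if "reachIn E UNIV l t" for t
    using that
  proof (induction rule: reachIn_induct)
    case base then show ?case using assms(2) by simp
  next
    case (step s t)
    then show ?case
    proof (cases "t = y")
      case True then show ?thesis using step by auto
    next
      case False
      then show ?thesis using step
        by (auto intro: reachIn_trans reachIn_edge)
    qed
  qed
  from this[OF assms(1)] show ?thesis by auto
qed

lemma reach_split:
  assumes "reachIn E (-{a}) b z" "b \<noteq> a" "b \<noteq> w"
  shows "reachIn E (-{a,w}) b z \<or> reachIn E (-{a}) b w"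
  using assms(1)
proof (induction rule: reachIn_induct)
  case base then show ?case by simp
next
  case (step s t)
  show ?case
  proof (cases "reachIn E (-{a,w}) b s")
    case True
    have "s \<noteq> w"
    proof
      assume "s = w"
      then show False using True reachIn_ends[OF True] assms by auto
    qed
    show ?thesis
    proof (cases "t = w")
      case True
      have "reachIn E (-{a}) b s" using \<open>reachIn E (-{a,w}) b s\<close> by (rule reachIn_mono) auto
      then show ?thesis using step True by (auto intro: reachIn_trans reachIn_edge)
    next
      case False
      have "reachIn E (-{a,w}) s t" using step False \<open>s \<noteq> w\<close> by (intro reachIn_edge) auto
      then show ?thesis using True by (auto intro: reachIn_trans)
    qed
  next
    case False
    then show ?thesis using step by auto
  qed
qed

lemma leaf_exists:
  assumes G: "is_graph N E" and A: "acyc E"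
  shows "adj E w a \<Longrightarrow> \<exists>z. reachIn E (-{w}) a z \<and> card (nbrs E z) \<le> 1"
proof (induction "card {z. reachIn E (-{w}) a z}" arbitrary: w a rule: less_induct)
  case less
  define S where "S = {z. reachIn E (-{w}) a z}"
  have aN: "a \<in> N" using graph_adjD[OF G less.prems] by auto
  have SN: "S \<subseteq> N" unfolding S_def using reach_in_N[OF G _ aN] by auto
  have fS: "finite S" using SN G finite_subset unfolding is_graph_def by auto
  show ?case
  proof (cases "card (nbrs E a) \<le> 1")
    case True then show ?thesis by (intro exI[of _ a]) simp
  next
    case False
    then obtain b where b: "b \<in> nbrs E a" "b \<noteq> w"
      by (metis One_nat_def card.empty card.infinite card_le_Suc0_iff_eq nat_le_linear zero_le_one)
    have ab: "adj E a b" using b unfolding nbrs_def by simp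
    have wa: "w \<noteq> a" "a \<noteq> b" using less.prems ab by (auto simp: adj_def)
    define S' where "S' = {z. reachIn E (-{a}) b z}"
    have sub: "S' \<subseteq> S"
    proof
      fix z assume "z \<in> S'"
      then have z: "reachIn E (-{a}) b z" unfolding S'_def by simp
      have "b \<noteq> a" using wa by auto
      from reach_split[OF z this b(2)] show "z \<in> S"
      proof
        assume h: "reachIn E (-{a,w}) b z"
        have "reachIn E (-{w}) a b" using ab wa b by (intro reachIn_edge) auto
        moreover have "reachIn E (-{w}) b z" using h by (rule reachIn_mono) auto
        ultimately show ?thesis unfolding S_def by (auto intro: reachIn_trans)
      next
        assume h: "reachIn E (-{a}) b w"
        show ?thesis using acyc_contra[OF A ab h less.prems] b by simp
      qed
    qed
    have "a \<in> S" unfolding S_def by simp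
    moreover have "a \<notin> S'" unfolding S'_def using reachIn_ends[of E "-{a}" b a] wa by auto
    ultimately have "card S' < card S" using sub fS by (metis psubsetI psubset_card_mono)
    then obtain z where z: "reachIn E (-{a}) b z" "card (nbrs E z) \<le> 1"
      using less.hyps[OF _ ab] unfolding S_def S'_def by blast
    then have "z \<in> S" using sub unfolding S'_def by auto
    then show ?thesis using z unfolding S_def by auto
  qed
qed


lemma acyc_mono: "acyc E \<Longrightarrow> E2 \<subseteq> E \<Longrightarrow> acyc E2"
  unfolding acyc_def by (meson Diff_mono order_refl reachIn_mono subsetD)

lemma deg1_nbrs: "degree E x = 1 \<Longrightarrow> \<exists>a. nbrs E x = {a}"
  unfolding degree_def by (meson card_1_singletonE)

lemma nbrs_adj: "y \<in> nbrs E x \<longleftrightarrow> adj E x y"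
  by (simp add: nbrs_def)

lemma del_graph: "is_graph N E \<Longrightarrow> is_graph (N - {x}) {e \<in> E. x \<notin> e}"
  unfolding is_graph_def by fastforce

lemma del_reach:
  assumes "nbrs E x = {a}" "Y \<subseteq> N - {x}" "p \<in> N - {x}" "q \<in> N - {x}"
  shows "reachIn {e \<in> E. x \<notin> e} (-Y) p q \<longleftrightarrow> reachIn E (-Y) p q"
proof
  assume "reachIn {e \<in> E. x \<notin> e} (-Y) p q"
  then show "reachIn E (-Y) p q" by (rule reachIn_mono) auto
next
  assume h: "reachIn E (-Y) p q"
  define g where "g s = (if s = x then a else s)" for s
  have stp: "reachIn {e \<in> E. x \<notin> e} (-Y) (g s) (g t)" if "adj E s t" "s \<in> -Y" "t \<in> -Y" for s t
  proof -
    consider "s = x" | "t = x" | "s \<noteq> x" "t \<noteq> x" by auto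
    then show ?thesis
    proof cases
      case 1
      then have "t = a" using assms(1) that(1) unfolding nbrs_def by auto
      then show ?thesis using 1 g_def by simp
    next
      case 2
      then have "s = a" using assms(1) adj_sym[OF that(1)] unfolding nbrs_def by auto
      then show ?thesis using 2 g_def by simp
    next
      case 3 then show ?thesis using that g_def by (intro reachIn_edge) (auto simp: adj_def)
    qed
  qed
  have "reachIn {e \<in> E. x \<notin> e} (-Y) (g p) (g q)" by (rule reachIn_map[OF h stp])
  then show "reachIn {e \<in> E. x \<notin> e} (-Y) p q" using assms(3,4) g_def by simp
qed

lemma del_nbrs: "nbrs {e \<in> E. x \<notin> e} z \<subseteq> nbrs E z"
  unfolding nbrs_def adj_def by auto

lemma sup_graph:
  assumes "is_graph N E" "nbrs E x = {a, b}" "a \<noteq> b"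
  shows "is_graph (N - {x}) ({e \<in> E. x \<notin> e} \<union> {{a, b}})"
proof -
  have "adj E x a" "adj E x b" using assms(2) unfolding nbrs_def by auto
  then have "a \<in> N" "b \<in> N" "a \<noteq> x" "b \<noteq> x" using graph_adjD[OF assms(1)] by (auto simp: adj_def)
  then show ?thesis using assms(1,3) unfolding is_graph_def by fastforce
qed

lemma sup_acyc:
  assumes A: "acyc E" and nb: "nbrs E x = {a, b}" "a \<noteq> b"
  shows "acyc ({e \<in> E. x \<notin> e} \<union> {{a, b}})"
  unfolding acyc_def
proof (intro allI impI notI)
  let ?E2 = "{e \<in> E. x \<notin> e} \<union> {{a, b}}"
  fix c d assume cd: "{c,d} \<in> ?E2" "c \<noteq> d" and r: "reachIn (?E2 - {{c,d}}) UNIV c d"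
  have xa: "adj E x a" "adj E x b" using nb unfolding nbrs_def by auto
  then have xne: "x \<noteq> a" "x \<noteq> b" by (auto simp: adj_def)
  show False
  proof (cases "{c,d} = {a,b}")
    case True
    have stp: "reachIn E (-{x}) (id s) (id t)" if "adj (?E2 - {{c,d}}) s t" "s \<in> UNIV" "t \<in> UNIV" for s t
      using that(1) True by (intro reachIn_edge) (auto simp: adj_def)
    have "reachIn E (-{x}) c d" using reachIn_map[OF r stp] by simp
    then have "reachIn E (-{x}) a b" using True reachIn_sym by (metis doubleton_eq_iff)
    then show False using acyc_contra[OF A xa(1) _ adj_sym[OF xa(2)]] nb by auto
  next
    case False
    then have cdE: "{c,d} \<in> E" "x \<notin> {c,d}" using cd by auto
    have stp: "reachIn (E - {{c,d}}) UNIV (id s) (id t)" if "adj (?E2 - {{c,d}}) s t" "s \<in> UNIV" "t \<in> UNIV" for s t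
    proof (cases "{s,t} = {a,b}")
      case True
      have "adj (E - {{c,d}}) s x" "adj (E - {{c,d}}) x t"
        using True xa cdE xne by (auto simp: adj_def doubleton_eq_iff insert_commute)
      then show ?thesis by (auto intro: reachIn_trans reachIn_edge)
    next
      case False
      then show ?thesis using that by (intro reachIn_edge) (auto simp: adj_def)
    qed
    have "reachIn (E - {{c,d}}) UNIV c d" using reachIn_map[OF r stp] by simp
    then show False using A cdE cd unfolding acyc_def by blast
  qed
qed

lemma sup_reach:
  assumes nb: "nbrs E x = {a, b}" "a \<noteq> b" and Y: "Y \<subseteq> N - {x}" "p \<in> N - {x}" "q \<in> N - {x}"
  shows "reachIn ({e \<in> E. x \<notin> e} \<union> {{a, b}}) (-Y) p q \<longleftrightarrow> reachIn E (-Y) p q"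
proof
  let ?E2 = "{e \<in> E. x \<notin> e} \<union> {{a, b}}"
  have xa: "adj E x a" "adj E x b" using nb unfolding nbrs_def by auto
  have xY: "x \<notin> Y" using Y by auto
  {
    assume h: "reachIn ?E2 (-Y) p q"
    have stp: "reachIn E (-Y) (id s) (id t)" if "adj ?E2 s t" "s \<in> -Y" "t \<in> -Y" for s t
    proof (cases "{s,t} = {a,b}")
      case True
      have "adj E s x" "adj E x t"
        using True xa adj_sym by (auto simp: doubleton_eq_iff)
      then show ?thesis using that xY by (auto intro: reachIn_trans reachIn_edge)
    next
      case False
      then show ?thesis using that by (intro reachIn_edge) (auto simp: adj_def)
    qed
    show "reachIn E (-Y) p q" using reachIn_map[OF h stp] by simp
  }
  {
    assume h: "reachIn E (-Y) p q"
    define x' where "x' = (if a \<notin> Y then a else b)"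
    define g where "g s = (if s = x then x' else s)" for s
    have stp: "reachIn ?E2 (-Y) (g s) (g t)" if "adj E s t" "s \<in> -Y" "t \<in> -Y" for s t
    proof -
      have gen: "reachIn ?E2 (-Y) x' t'" if "adj E x t'" "t' \<in> -Y" for t'
      proof -
        have "t' \<in> {a,b}" using nb that(1) unfolding nbrs_def by auto
        then show ?thesis
        proof
          assume "t' = a" then show ?thesis using x'_def that by auto
        next
          assume "t' \<in> {b}"
          then have tb: "t' = b" by simp
          show ?thesis
          proof (cases "a \<notin> Y")
            case True
            then show ?thesis using x'_def tb that nb(2) by (intro reachIn_edge) (auto simp: adj_def)
          next
            case False then show ?thesis using x'_def tb by simp
          qed
        qed
      qed
      consider "s = x" | "t = x" | "s \<noteq> x" "t \<noteq> x" by auto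
      then show ?thesis
      proof cases
        case 1
        then have "t \<noteq> x" using that(1) by (auto simp: adj_def)
        then show ?thesis using 1 gen[of t] that g_def by simp
      next
        case 2
        then have "s \<noteq> x" using that(1) by (auto simp: adj_def)
        then show ?thesis using 2 gen[of s] that g_def adj_sym reachIn_sym by metis
      next
        case 3 then show ?thesis using that g_def by (intro reachIn_edge) (auto simp: adj_def)
      qed
    qed
    have "reachIn ?E2 (-Y) (g p) (g q)" by (rule reachIn_map[OF h stp])
    then show "reachIn ?E2 (-Y) p q" using Y g_def by simp
  }
qed

lemma sup_nbrs:
  assumes "is_graph N E" "nbrs E x = {a, b}" "a \<noteq> b" "z \<noteq> x"
  shows "card (nbrs ({e \<in> E. x \<notin> e} \<union> {{a, b}}) z) \<le> card (nbrs E z)"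
proof -
  let ?E2 = "{e \<in> E. x \<notin> e} \<union> {{a, b}}"
  have xa: "adj E x a" "adj E x b" using assms(2) unfolding nbrs_def by auto
  have fin: "finite (nbrs E z)" using nbrs_finite[OF assms(1)] .
  show ?thesis
  proof (cases "z = a \<or> z = b")
    case False
    then have "nbrs ?E2 z \<subseteq> nbrs E z" unfolding nbrs_def adj_def by (auto simp: doubleton_eq_iff)
    then show ?thesis using fin card_mono by blast
  next
    case True
    then obtain o' where o': "{z, o'} = {a, b}" "z \<noteq> o'" using assms(3) by auto
    have xz: "x \<in> nbrs E z" using xa True adj_sym unfolding nbrs_def by auto
    have "nbrs ?E2 z \<subseteq> insert o' (nbrs E z - {x})"
      unfolding nbrs_def adj_def using o' by (auto simp: doubleton_eq_iff)
    then have "card (nbrs ?E2 z) \<le> card (insert o' (nbrs E z - {x}))"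
      using fin by (intro card_mono) auto
    also have "\<dots> \<le> Suc (card (nbrs E z - {x}))" using fin by (simp add: card_insert_if)
    also have "\<dots> = card (nbrs E z)" using xz fin
      by (metis card_Suc_Diff1)
    finally show ?thesis .
  qed
qed

definition Inv :: "'a set \<Rightarrow> 'a set \<Rightarrow> 'a set set \<Rightarrow> 'a set \<Rightarrow> 'a set set \<Rightarrow> bool" where
  "Inv Lab N0 E0 N E \<longleftrightarrow> is_graph N E \<and> acyc E \<and> N \<subseteq> N0 \<and>
     (\<forall>Y p q. Y \<subseteq> N \<longrightarrow> p \<in> N \<longrightarrow> q \<in> N \<longrightarrow> (reachIn E (-Y) p q \<longleftrightarrow> reachIn E0 (-Y) p q)) \<and>
     (\<forall>l\<in>Lab. l \<in> N \<and> card (nbrs E l) \<le> 1)"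

lemma step_facts:
  assumes st: "reduce_step Lab (N, E) (N2, E2)" and G: "is_graph N E"
  shows "is_graph N2 E2 \<and> N2 \<subseteq> N \<and> (acyc E \<longrightarrow> acyc E2) \<and>
    (\<forall>Y p q. Y \<subseteq> N2 \<longrightarrow> p \<in> N2 \<longrightarrow> q \<in> N2 \<longrightarrow> (reachIn E2 (-Y) p q \<longleftrightarrow> reachIn E (-Y) p q)) \<and>
    (\<forall>z\<in>N. card (nbrs E z) \<noteq> 1 \<longrightarrow> card (nbrs E z) \<noteq> 2 \<longrightarrow> z \<in> N2 \<and> card (nbrs E2 z) \<le> card (nbrs E z)) \<and>
    (\<forall>l\<in>Lab. l \<in> N \<longrightarrow> card (nbrs E l) \<le> 1 \<longrightarrow> l \<in> N2 \<and> card (nbrs E2 l) \<le> 1)"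
  using st
proof (cases rule: reduce_step.cases)
  case (delete x)
  obtain a where a: "nbrs E x = {a}" using deg1_nbrs delete by metis
  have cn: "card (nbrs E2 z) \<le> card (nbrs E z)" for z
    using delete del_nbrs nbrs_finite[OF G] card_mono by metis
  have "\<forall>l\<in>Lab. l \<in> N \<longrightarrow> card (nbrs E l) \<le> 1 \<longrightarrow> l \<in> N2 \<and> card (nbrs E2 l) \<le> 1"
    using cn[of l] delete le_trans by (metis Diff_iff cn singletonD)
  then show ?thesis using delete del_graph[OF G] acyc_mono[of E E2] del_reach[OF a] cn
    by (auto simp: degree_def)
next
  case (suppress x a b)
  have cx: "card (nbrs E x) = 2" using suppress by simp
  have cn: "z \<noteq> x \<Longrightarrow> card (nbrs E2 z) \<le> card (nbrs E z)" for z
    using sup_nbrs[OF G suppress(4,5)] suppress by simp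
  have "\<forall>l\<in>Lab. l \<in> N \<longrightarrow> card (nbrs E l) \<le> 1 \<longrightarrow> l \<in> N2 \<and> card (nbrs E2 l) \<le> 1"
  proof (intro ballI impI)
    fix l assume "l \<in> Lab" "l \<in> N" "card (nbrs E l) \<le> 1"
    then have "l \<noteq> x" using cx by auto
    then show "l \<in> N2 \<and> card (nbrs E2 l) \<le> 1" using cn[of l] suppress \<open>l \<in> N\<close> \<open>card (nbrs E l) \<le> 1\<close> by auto
  qed
  moreover have "\<forall>z\<in>N. card (nbrs E z) \<noteq> 1 \<longrightarrow> card (nbrs E z) \<noteq> 2 \<longrightarrow> z \<in> N2 \<and> card (nbrs E2 z) \<le> card (nbrs E z)"
    using cx cn suppress(1) by fastforce
  ultimately show ?thesis using suppress sup_graph[OF G suppress(4,5)] sup_acyc[OF _ suppress(4,5)]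
      sup_reach[OF suppress(4,5)]
    by auto
qed


lemma three_nbrs:
  assumes G: "is_graph N E"
    and r: "reachIn E UNIV l1 y" "reachIn E UNIV l2 y" "reachIn E UNIV l3 y"
    and ne: "l1 \<noteq> y" "l2 \<noteq> y" "l3 \<noteq> y"
    and s: "\<not> reachIn E (-{y}) l1 l2" "\<not> reachIn E (-{y}) l1 l3" "\<not> reachIn E (-{y}) l2 l3"
  shows "3 \<le> card (nbrs E y)"
proof -
  obtain n1 where n1: "adj E n1 y" "reachIn E (-{y}) l1 n1" using nbr_extract[OF r(1) ne(1)] by auto
  obtain n2 where n2: "adj E n2 y" "reachIn E (-{y}) l2 n2" using nbr_extract[OF r(2) ne(2)] by auto
  obtain n3 where n3: "adj E n3 y" "reachIn E (-{y}) l3 n3" using nbr_extract[OF r(3) ne(3)] by auto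
  have d: "n1 \<noteq> n2" "n1 \<noteq> n3" "n2 \<noteq> n3"
    using n1 n2 n3 s by (metis reachIn_sym reachIn_trans)+
  have "{n1, n2, n3} \<subseteq> nbrs E y" using n1 n2 n3 adj_sym unfolding nbrs_def by auto
  then have "card {n1, n2, n3} \<le> card (nbrs E y)" using nbrs_finite[OF G] card_mono by blast
  then show ?thesis using d by simp
qed

definition sep3 :: "'a set set \<Rightarrow> 'a set \<Rightarrow> 'a \<Rightarrow> bool" where
  "sep3 E0 Lab y \<longleftrightarrow> (\<exists>l1 l2 l3. l1 \<in> Lab \<and> l2 \<in> Lab \<and> l3 \<in> Lab \<and> l1 \<noteq> y \<and> l2 \<noteq> y \<and> l3 \<noteq> y \<and>
      \<not> reachIn E0 (-{y}) l1 l2 \<and> \<not> reachIn E0 (-{y}) l1 l3 \<and> \<not> reachIn E0 (-{y}) l2 l3)"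

lemma reduce_inv:
  assumes st: "(reduce_step Lab)\<^sup>*\<^sup>* (N0, E0) (N', E')"
    and G0: "is_graph N0 E0" "acyc E0" "conn N0 E0" "\<forall>l\<in>Lab. l \<in> N0 \<and> card (nbrs E0 l) \<le> 1"
    and good: "Good \<subseteq> N0" "\<forall>y\<in>Good. sep3 E0 Lab y"
  shows "Inv Lab N0 E0 N' E' \<and> Good \<subseteq> N'"
proof -
  let ?P = "\<lambda>s. Inv Lab N0 E0 (fst s) (snd s) \<and> Good \<subseteq> fst s"
  have base: "?P (N0, E0)" using G0 good unfolding Inv_def by auto
  have stepP: "?P s2" if "reduce_step Lab s1 s2" "?P s1" for s1 s2
  proof -
    obtain N E where s1: "s1 = (N, E)" by fastforce
    obtain N2 E2 where s2: "s2 = (N2, E2)" by fastforce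
    have I: "Inv Lab N0 E0 N E" "Good \<subseteq> N" using that(2) s1 by auto
    have G: "is_graph N E" using I unfolding Inv_def by auto
    note F = step_facts[OF that(1)[unfolded s1 s2] G]
    have R: "Y \<subseteq> N \<Longrightarrow> p \<in> N \<Longrightarrow> q \<in> N \<Longrightarrow> reachIn E (-Y) p q \<longleftrightarrow> reachIn E0 (-Y) p q" for Y p q
      using I unfolding Inv_def by blast
    have LabN: "\<forall>l\<in>Lab. l \<in> N \<and> card (nbrs E l) \<le> 1" using I unfolding Inv_def by auto
    have goodsurv: "y \<in> N2" if y: "y \<in> Good" for y
    proof -
      have yN: "y \<in> N" using I y by auto
      obtain l1 l2 l3 where l: "l1 \<in> Lab" "l2 \<in> Lab" "l3 \<in> Lab" "l1 \<noteq> y" "l2 \<noteq> y" "l3 \<noteq> y"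
        "\<not> reachIn E0 (-{y}) l1 l2" "\<not> reachIn E0 (-{y}) l1 l3" "\<not> reachIn E0 (-{y}) l2 l3"
        using good(2) y unfolding sep3_def by blast
      have lN: "l1 \<in> N" "l2 \<in> N" "l3 \<in> N" using LabN l by auto
      have c0: "reachIn E0 UNIV a b" if "a \<in> N" "b \<in> N" for a b
        using G0(3) that I unfolding conn_def Inv_def by auto
      have rr: "reachIn E UNIV a b" if "a \<in> N" "b \<in> N" for a b
        using R[of "{}" a b] c0[OF that] that by simp
      have "3 \<le> card (nbrs E y)"
        apply (rule three_nbrs[OF G rr[OF lN(1) yN] rr[OF lN(2) yN] rr[OF lN(3) yN] l(4-6)])
        using R[of "{y}"] yN lN l(7-9) by auto
      then show ?thesis using F yN by auto
    qed
    have "Inv Lab N0 E0 N2 E2"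
      unfolding Inv_def
    proof (intro conjI allI impI)
      show "is_graph N2 E2" using F by auto
      show "acyc E2" using F I unfolding Inv_def by auto
      show "N2 \<subseteq> N0" using F I unfolding Inv_def by auto
      show "\<forall>l\<in>Lab. l \<in> N2 \<and> card (nbrs E2 l) \<le> 1" using F LabN by auto
      fix Y p q assume "Y \<subseteq> N2" "p \<in> N2" "q \<in> N2"
      then show "reachIn E2 (-Y) p q \<longleftrightarrow> reachIn E0 (-Y) p q"
        using F R[of Y p q] by auto
    qed
    then show ?thesis using goodsurv s2 by auto
  qed
  have "?P (N', E')"
    using st
  proof (induction rule: rtranclp_induct)
    case base then show ?case using \<open>?P (N0, E0)\<close> .
  next
    case (step y z) then show ?case using stepP by blast
  qed
  then show ?thesis by simp
qed


locale tset =
  fixes N :: "'n set" and E :: "'n set set" and u v :: 'n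
  assumes G: "is_graph N E" and A: "acyc E" and C: "conn N E"
    and uvE: "{u, v} \<in> E" and uv: "u \<noteq> v"
begin

abbreviation "N0 \<equiv> init_nodes N"
abbreviation "E0 \<equiv> init_edges E u v"

lemma uvN: "u \<in> N" "v \<in> N" using graph_adjD[OF G, of u v] uvE uv by (auto simp: adj_def)

lemma mem_E0:
  "e \<in> E0 \<longleftrightarrow>
    (\<exists>i\<in>{1,2,3}. \<exists>x y. e = {Cp i x, Cp i y} \<and> {x,y} \<in> E \<and> {x,y} \<noteq> {u,v}) \<or>
    (\<exists>i\<in>{1,2,3}. e \<in> {{Cp i u, Sub i}, {Sub i, Cp i v}, {Sub i, Ctr}})"
  unfolding init_edges_def Un_iff mem_Collect_eq insert_iff empty_iff by blast

lemma adj0: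
  "adj E0 s t \<longleftrightarrow>
    (\<exists>i\<in>{1,2,3}. \<exists>x y. s = Cp i x \<and> t = Cp i y \<and> adj E x y \<and> {x,y} \<noteq> {u,v}) \<or>
    (\<exists>i\<in>{1,2,3}. (s = Cp i u \<and> t = Sub i) \<or> (s = Sub i \<and> t = Cp i u) \<or>
        (s = Cp i v \<and> t = Sub i) \<or> (s = Sub i \<and> t = Cp i v) \<or>
        (s = Sub i \<and> t = Ctr) \<or> (s = Ctr \<and> t = Sub i))"
  (is "?L \<longleftrightarrow> ?A \<or> ?B")
proof
  assume L: ?L
  then have st: "{s,t} \<in> E0" "s \<noteq> t" by (auto simp: adj_def)
  from st(1)[unfolded mem_E0] show "?A \<or> ?B"
  proof (elim disjE bexE exE conjE)
    fix i x y assume h: "i \<in> {1,2,3}" "{s, t} = {Cp i x, Cp i y}" "{x, y} \<in> E" "{x, y} \<noteq> {u, v}"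
    have "x \<noteq> y"
    proof
      assume "x = y"
      then have "{s,t} = {Cp i x}" using h(2) by simp
      then show False using st(2) by (metis insertCI singletonD)
    qed
    then have a: "adj E x y" "adj E y x" "{y,x} \<noteq> {u,v}" using h(3,4) by (auto simp: adj_def insert_commute)
    from h(2) have "(s = Cp i x \<and> t = Cp i y) \<or> (s = Cp i y \<and> t = Cp i x)" by (simp add: doubleton_eq_iff)
    then have ?A using a h(1,4) by blast
    then show ?thesis by (rule disjI1)
  next
    fix i assume i: "i \<in> {1,2,3}" and h0: "{s, t} \<in> {{Cp i u, Sub i}, {Sub i, Cp i v}, {Sub i, Ctr}}"
    then have h: "{s, t} = {Cp i u, Sub i} \<or> {s, t} = {Sub i, Cp i v} \<or> {s, t} = {Sub i, Ctr}" by simp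
    have "(s = Cp i u \<and> t = Sub i) \<or> (s = Sub i \<and> t = Cp i u) \<or>
        (s = Cp i v \<and> t = Sub i) \<or> (s = Sub i \<and> t = Cp i v) \<or>
        (s = Sub i \<and> t = Ctr) \<or> (s = Ctr \<and> t = Sub i)"
      using h unfolding doubleton_eq_iff by blast
    then have ?B by (intro bexI[OF _ i])
    then show ?thesis by (rule disjI2)
  qed
next
  assume "?A \<or> ?B"
  then show ?L
  proof
    assume ?A
    then obtain i x y where h: "i \<in> {1,2,3}" "s = Cp i x" "t = Cp i y" "adj E x y" "{x,y} \<noteq> {u,v}" by blast
    have "\<exists>x' y'. {s,t} = {Cp i x', Cp i y'} \<and> {x',y'} \<in> E \<and> {x',y'} \<noteq> {u,v}"
      using h(2-5) by (auto simp: adj_def)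
    then have "{s,t} \<in> E0" unfolding mem_E0 using h(1) by blast
    moreover have "s \<noteq> t" using h(2-4) by (auto simp: adj_def)
    ultimately show ?L by (simp add: adj_def)
  next
    assume ?B
    then obtain i where i: "i \<in> {1,2,3}" and h: "(s = Cp i u \<and> t = Sub i) \<or> (s = Sub i \<and> t = Cp i u) \<or>
        (s = Cp i v \<and> t = Sub i) \<or> (s = Sub i \<and> t = Cp i v) \<or>
        (s = Sub i \<and> t = Ctr) \<or> (s = Ctr \<and> t = Sub i)" by blast
    have "{s,t} = {Cp i u, Sub i} \<or> {s,t} = {Sub i, Cp i v} \<or> {s,t} = {Sub i, Ctr}"
      using h by (auto simp: insert_commute)
    then have "{s,t} \<in> {{Cp i u, Sub i}, {Sub i, Cp i v}, {Sub i, Ctr}}" by simp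
    then have "{s,t} \<in> E0" unfolding mem_E0 using i by blast
    moreover have "s \<noteq> t" using h by auto
    ultimately show ?L by (simp add: adj_def)
  qed
qed

end

context tset begin

lemma adj0_cases[consumes 1, case_names cp cu uc cv vc sc cs]:
  assumes "adj E0 s t"
  obtains (cp) i x y where "i \<in> {1,2,3}" "s = Cp i x" "t = Cp i y" "adj E x y" "{x,y} \<noteq> {u,v}"
    | (cu) i where "i \<in> {1,2,3}" "s = Cp i u" "t = Sub i"
    | (uc) i where "i \<in> {1,2,3}" "s = Sub i" "t = Cp i u"
    | (cv) i where "i \<in> {1,2,3}" "s = Cp i v" "t = Sub i"
    | (vc) i where "i \<in> {1,2,3}" "s = Sub i" "t = Cp i v"
    | (sc) i where "i \<in> {1,2,3}" "s = Sub i" "t = Ctr"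
    | (cs) i where "i \<in> {1,2,3}" "s = Ctr" "t = Sub i"
  using assms unfolding adj0
  by (elim disjE bexE exE conjE) ((rule cp; assumption) | (rule cu; assumption) | (rule uc; assumption) |
      (rule cv; assumption) | (rule vc; assumption) | (rule sc; assumption) | (rule cs; assumption))+

lemma N0_eq: "N0 = (Cp 1 ` N) \<union> (Cp 2 ` N) \<union> (Cp 3 ` N) \<union> {Sub 1, Sub 2, Sub 3, Ctr}"
  unfolding init_nodes_def by auto

lemma in_N0: "i \<in> {1,2,3} \<Longrightarrow> x \<in> N \<Longrightarrow> Cp i x \<in> N0" "i \<in> {1,2,3} \<Longrightarrow> Sub i \<in> N0" "Ctr \<in> N0"
  unfolding init_nodes_def by blast+

lemma G0_graph: "is_graph N0 E0"
proof -
  have "finite N" using G unfolding is_graph_def by auto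
  then have "finite N0" unfolding N0_eq by auto
  moreover have "\<forall>e\<in>E0. \<exists>x y. e = {x, y} \<and> x \<noteq> y \<and> x \<in> N0 \<and> y \<in> N0"
  proof
    fix e assume "e \<in> E0"
    then show "\<exists>x y. e = {x, y} \<and> x \<noteq> y \<and> x \<in> N0 \<and> y \<in> N0"
      unfolding mem_E0
    proof (elim disjE bexE exE conjE)
      fix i x y assume h: "i \<in> {1,2,3}" "e = {Cp i x, Cp i y}" "{x, y} \<in> E" "{x, y} \<noteq> {u, v}"
      have "adj E x y" using h(3) G unfolding is_graph_def adj_def
        by (metis doubleton_eq_iff)
      then have "x \<in> N" "y \<in> N" "x \<noteq> y" using graph_adjD[OF G] by (auto simp: adj_def)
      then show ?thesis using h(1,2) in_N0 by blast
    next
      fix i assume i: "i \<in> {1,2,3}" and h: "e \<in> {{Cp i u, Sub i}, {Sub i, Cp i v}, {Sub i, Ctr}}"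
      have "Cp i u \<in> N0" "Cp i v \<in> N0" "Sub i \<in> N0" "Ctr \<in> N0" using in_N0 i uvN by auto
      then show ?thesis using h by blast
    qed
  qed
  ultimately show ?thesis unfolding is_graph_def by auto
qed

lemma lift:
  assumes "reachIn E (-Y) x z" "u \<notin> Y" "v \<notin> Y" "i \<in> {1,2,3}"
  shows "reachIn E0 (Cp i ` (-Y) \<union> {Sub i}) (Cp i x) (Cp i z)"
proof -
  have stp: "reachIn E0 (Cp i ` (-Y) \<union> {Sub i}) (Cp i s) (Cp i t)" if "adj E s t" "s \<in> -Y" "t \<in> -Y" for s t
  proof (cases "{s,t} = {u,v}")
    case True
    then have "adj E0 (Cp i s) (Sub i) \<and> adj E0 (Sub i) (Cp i t)"
      using assms(4) by (auto simp: adj0 doubleton_eq_iff)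
    then show ?thesis using that by (meson Un_iff image_eqI insertI1 reachIn_edge reachIn_trans)
  next
    case False
    then have "adj E0 (Cp i s) (Cp i t)" using that assms(4) by (auto simp: adj0)
    then show ?thesis using that by (intro reachIn_edge) auto
  qed
  show ?thesis by (rule reachIn_map[OF assms(1) stp])
qed

lemma reach_Ctr: "s \<in> N0 \<Longrightarrow> reachIn E0 UNIV s Ctr"
proof -
  assume s: "s \<in> N0"
  have sub: "reachIn E0 UNIV (Sub i) Ctr" if "i \<in> {1,2,3}" for i
    using that by (intro reachIn_edge) (auto simp: adj0)
  show ?thesis
  proof (cases s)
    case (Cp i x)
    then have ix: "i \<in> {1,2,3}" "x \<in> N" using s unfolding init_nodes_def by auto
    have "reachIn E (-{}) x u" using C ix uvN unfolding conn_def by auto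
    from lift[OF this _ _ ix(1)] have "reachIn E0 UNIV (Cp i x) (Cp i u)" by (auto elim: reachIn_mono)
    moreover have "reachIn E0 UNIV (Cp i u) (Sub i)" using ix by (intro reachIn_edge) (auto simp: adj0)
    ultimately show ?thesis using Cp sub[OF ix(1)] by (meson reachIn_trans)
  next
    case (Sub i)
    then show ?thesis using s sub unfolding init_nodes_def by auto
  qed simp
qed

lemma G0_conn: "conn N0 E0"
  unfolding conn_def using reach_Ctr by (meson reachIn_sym reachIn_trans)

lemma acyc_E: "{x,y} \<in> E \<Longrightarrow> x \<noteq> y \<Longrightarrow> \<not> reachIn (E - {{x,y}}) UNIV x y"
  using A unfolding acyc_def by blast


end

context tset begin

lemma reachIn_empty: "reachIn {} S a b \<Longrightarrow> a = b"
  by (induction rule: reachIn_induct) (auto simp: adj_def)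

lemma radj: "adj (E0 - {{s,t}}) a b \<longleftrightarrow> adj E0 a b \<and> {a,b} \<noteq> {s,t}"
  by (auto simp: adj_def)

lemma nc_copy:
  assumes edge: "adj E x y" "{x,y} \<noteq> {u,v}" "i \<in> {1,2,3}"
  shows "\<not> reachIn (E0 - {{Cp i x, Cp i y}}) UNIV (Cp i x) (Cp i y)"
proof
  let ?R = "E0 - {{Cp i x, Cp i y}}"
  assume r: "reachIn ?R UNIV (Cp i x) (Cp i y)"
  define g where "g z = (case z of Cp j a \<Rightarrow> (if j = i then a else u) | _ \<Rightarrow> u)" for z
  have e: "adj (E - {{x,y}}) u v" "adj (E - {{x,y}}) v u" using uvE uv edge(2)
    by (auto simp: adj_def doubleton_eq_iff insert_commute)
  have stp: "reachIn (E - {{x,y}}) UNIV (g a) (g b)" if "adj ?R a b" "a \<in> UNIV" "b \<in> UNIV" for a b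
  proof -
    have ab: "adj E0 a b" "{a,b} \<noteq> {Cp i x, Cp i y}" using that(1) radj by auto
    show ?thesis using ab(1)
    proof (cases rule: adj0_cases)
      case (cp j a' b')
      show ?thesis
      proof (cases "j = i")
        case True
        then have "{a',b'} \<noteq> {x,y}" using ab(2) cp by (auto simp: doubleton_eq_iff)
        then show ?thesis using cp True g_def by (intro reachIn_edge) (auto simp: adj_def)
      next
        case False then show ?thesis using cp g_def by simp
      qed
    qed (auto simp: g_def intro: reachIn_edge e)
  qed
  have "reachIn (E - {{x,y}}) UNIV (g (Cp i x)) (g (Cp i y))" by (rule reachIn_map[OF r stp])
  then show False using edge g_def acyc_E[of x y] by (simp add: adj_def)
qed

lemma nc_U:
  assumes "i \<in> {1,2,3}"
  shows "\<not> reachIn (E0 - {{Cp i u, Sub i}}) UNIV (Cp i u) (Sub i)"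
proof
  let ?R = "E0 - {{Cp i u, Sub i}}"
  assume r: "reachIn ?R UNIV (Cp i u) (Sub i)"
  define g where "g z = (case z of Cp j a \<Rightarrow> (if j = i then a else v) | _ \<Rightarrow> v)" for z
  have stp: "reachIn (E - {{u,v}}) UNIV (g a) (g b)" if "adj ?R a b" "a \<in> UNIV" "b \<in> UNIV" for a b
  proof -
    have ab: "adj E0 a b" "{a,b} \<noteq> {Cp i u, Sub i}" using that(1) radj by auto
    show ?thesis using ab(1)
    proof (cases rule: adj0_cases)
      case (cp j a' b')
      then show ?thesis using g_def by (cases "j = i") (auto intro!: reachIn_edge simp: adj_def)
    qed (use ab(2) in \<open>auto simp: g_def insert_commute\<close>)
  qed
  have "reachIn (E - {{u,v}}) UNIV (g (Cp i u)) (g (Sub i))" by (rule reachIn_map[OF r stp])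
  then show False using g_def acyc_E[OF uvE uv] by simp
qed

lemma nc_V:
  assumes "i \<in> {1,2,3}"
  shows "\<not> reachIn (E0 - {{Sub i, Cp i v}}) UNIV (Sub i) (Cp i v)"
proof
  let ?R = "E0 - {{Sub i, Cp i v}}"
  assume r: "reachIn ?R UNIV (Sub i) (Cp i v)"
  define g where "g z = (case z of Cp j a \<Rightarrow> (if j = i then a else u) | _ \<Rightarrow> u)" for z
  have stp: "reachIn (E - {{u,v}}) UNIV (g a) (g b)" if "adj ?R a b" "a \<in> UNIV" "b \<in> UNIV" for a b
  proof -
    have ab: "adj E0 a b" "{a,b} \<noteq> {Sub i, Cp i v}" using that(1) radj by auto
    show ?thesis using ab(1)
    proof (cases rule: adj0_cases)
      case (cp j a' b')
      then show ?thesis using g_def by (cases "j = i") (auto intro!: reachIn_edge simp: adj_def)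
    qed (use ab(2) in \<open>auto simp: g_def insert_commute\<close>)
  qed
  have "reachIn (E - {{u,v}}) UNIV (g (Sub i)) (g (Cp i v))" by (rule reachIn_map[OF r stp])
  then show False using g_def acyc_E[OF uvE uv] by simp
qed

lemma nc_C:
  assumes "i \<in> {1,2,3}"
  shows "\<not> reachIn (E0 - {{Sub i, Ctr}}) UNIV (Sub i) Ctr"
proof
  let ?R = "E0 - {{Sub i, Ctr}}"
  assume r: "reachIn ?R UNIV (Sub i) Ctr"
  define g where "g z = (case z of Cp j a \<Rightarrow> j = i | Sub j \<Rightarrow> j = i | Ctr \<Rightarrow> False)" for z :: "'n rnode"
  have stp: "reachIn ({} :: bool set set) UNIV (g a) (g b)" if "adj ?R a b" "a \<in> UNIV" "b \<in> UNIV" for a b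
  proof -
    have ab: "adj E0 a b" "{a,b} \<noteq> {Sub i, Ctr}" using that(1) radj by auto
    show ?thesis using ab(1)
    proof (cases rule: adj0_cases)
      case (sc j)
      then have "j \<noteq> i" using ab(2) by auto
      then show ?thesis using sc g_def by simp
    next
      case (cs j)
      then have "j \<noteq> i" using ab(2) by (auto simp: insert_commute)
      then show ?thesis using cs g_def by simp
    qed (auto simp: g_def)
  qed
  have "reachIn ({} :: bool set set) UNIV (g (Sub i)) (g Ctr)" by (rule reachIn_map[OF r stp])
  moreover have "g (Sub i) \<noteq> g Ctr" using g_def by simp
  ultimately show False using reachIn_empty[of UNIV "g (Sub i)" "g Ctr"] by blast
qed

lemma G0_acyc: "acyc E0"
  unfolding acyc_def
proof (intro allI impI notI)
  fix s t assume st: "{s,t} \<in> E0" "s \<noteq> t" and r: "reachIn (E0 - {{s,t}}) UNIV s t"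
  have r': "reachIn (E0 - {{t,s}}) UNIV t s" using reachIn_sym[OF r] by (simp add: insert_commute)
  have st': "adj E0 s t" using st by (simp add: adj_def)
  then show False
  proof (cases rule: adj0_cases)
    case (cp i x y)
    then show False using nc_copy r by blast
  next
    case (cu i) then show False using nc_U r by blast
  next
    case (uc i) then show False using nc_U r' by blast
  next
    case (vc i) then show False using nc_V r by blast
  next
    case (cv i) then show False using nc_V r' by blast
  next
    case (sc i) then show False using nc_C r by blast
  next
    case (cs i) then show False using nc_C r' by blast
  qed
qed

end

context tset begin

lemma sub_char_u: "w \<in> N \<Longrightarrow> w \<noteq> u \<Longrightarrow>
  r_subtree N E {u,v} w = {x\<in>N. x = w \<or> \<not> reachIn E (-{w}) x u}"
  using r_subtree_char[OF G A C uvE uv] by blast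

lemma sub_char_v: "w \<in> N \<Longrightarrow> w \<noteq> v \<Longrightarrow>
  r_subtree N E {u,v} w = {x\<in>N. x = w \<or> \<not> reachIn E (-{w}) x v}"
  using r_subtree_char[OF G A C _ uv[symmetric]] uvE by (simp add: insert_commute)

lemma label_deg:
  assumes "nbrs E z = {a}" "i \<in> {1,2,3}"
  shows "card (nbrs E0 (Cp i z)) \<le> 1"
proof -
  have za: "adj E z a" using assms(1) unfolding nbrs_def by auto
  have "nbrs E0 (Cp i z) \<subseteq> (if z \<in> {u,v} then {Sub i} else {Cp i a})"
  proof
    fix t assume "t \<in> nbrs E0 (Cp i z)"
    then have "adj E0 (Cp i z) t" unfolding nbrs_def by simp
    then show "t \<in> (if z \<in> {u,v} then {Sub i} else {Cp i a})"
    proof (cases rule: adj0_cases)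
      case (cp j x y)
      then have xy: "x = z" "j = i" "adj E z y" by auto
      then have ya: "y = a" using assms(1) unfolding nbrs_def by auto
      have "z \<notin> {u,v}"
      proof
        assume "z \<in> {u,v}"
        have "adj E z (if z = u then v else u)" using \<open>z \<in> {u,v}\<close> uvE uv
          by (auto simp: adj_def insert_commute)
        then have "(if z = u then v else u) \<in> nbrs E z" unfolding nbrs_def by simp
        then have "a = (if z = u then v else u)" using assms(1) by simp
        then have "{z,a} = {u,v}" using \<open>z \<in> {u,v}\<close> by (auto simp: insert_commute)
        then show False using cp xy ya by simp
      qed
      then show ?thesis using cp xy ya by simp
    qed auto
  qed
  moreover have fin: "finite (if z \<in> {u,v} then {Sub i} else {Cp i a})" by simp
  ultimately have "card (nbrs E0 (Cp i z)) \<le> card (if z \<in> {u,v} then {Sub i} else {Cp i a})"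
    using card_mono by blast
  then show ?thesis by (simp split: if_splits)
qed

lemma closure:
  assumes "u \<notin> S" "v \<notin> S" "\<forall>x\<in>S. \<forall>z. adj E x z \<longrightarrow> z \<noteq> w \<longrightarrow> z \<in> S"
    and "reachIn E0 (-{Cp i w}) s t" "s \<in> Cp i ` S"
  shows "t \<in> Cp i ` S"
  using assms(4,5)
proof (rule reachIn_closed)
  fix s' t' assume h: "adj E0 s' t'" "s' \<in> -{Cp i w}" "t' \<in> -{Cp i w}" "s' \<in> Cp i ` S"
  from h(1) show "t' \<in> Cp i ` S"
  proof (cases rule: adj0_cases)
    case (cp j x y)
    then have "j = i" "x \<in> S" using h(4) by auto
    then show ?thesis using cp h(3) assms(3) by auto
  qed (use h(4) assms(1,2) in auto)
qed

lemma reach_Ctr_avoid: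
  assumes w: "w \<in> N" "w \<notin> {u,v}" and i: "i \<in> {1,2,3}"
    and s: "s \<in> N0" "s \<noteq> Cp i w" "s \<notin> Cp i ` r_subtree N E {u,v} w"
  shows "reachIn E0 (-{Cp i w}) s Ctr"
proof -
  have sub: "reachIn E0 (-{Cp i w}) (Sub j) Ctr" if "j \<in> {1,2,3}" for j
    using that by (intro reachIn_edge) (auto simp: adj0)
  have cu: "reachIn E0 (-{Cp i w}) (Cp j u) Ctr" if "j \<in> {1,2,3}" for j
  proof -
    have "reachIn E0 (-{Cp i w}) (Cp j u) (Sub j)" using that w by (intro reachIn_edge) (auto simp: adj0)
    then show ?thesis using sub[OF that] by (rule reachIn_trans)
  qed
  show ?thesis
  proof (cases s)
    case (Cp j x)
    then have jx: "j \<in> {1,2,3}" "x \<in> N" using s unfolding init_nodes_def by auto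
    show ?thesis
    proof (cases "j = i")
      case True
      then have "x \<noteq> w" "x \<notin> r_subtree N E {u,v} w" using s Cp by auto
      then have "reachIn E (-{w}) x u" using sub_char_u[OF w(1)] w jx by auto
      from lift[OF this _ _ i] w have "reachIn E0 (Cp i ` (-{w}) \<union> {Sub i}) (Cp i x) (Cp i u)" by auto
      then have "reachIn E0 (-{Cp i w}) (Cp i x) (Cp i u)" by (rule reachIn_mono) auto
      then show ?thesis using cu[OF i] Cp True by (meson reachIn_trans)
    next
      case False
      have "reachIn E (-{}) x u" using C jx uvN unfolding conn_def by auto
      from lift[OF this _ _ jx(1)] have r1: "reachIn E0 (Cp j ` (-{}) \<union> {Sub j}) (Cp j x) (Cp j u)" by auto
      have ss: "Cp j ` (-{}) \<union> {Sub j} \<subseteq> -{Cp i w}" using False by blast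
      have "reachIn E0 (-{Cp i w}) (Cp j x) (Cp j u)" using reachIn_mono[OF r1 order_refl ss] .
      then show ?thesis using cu[OF jx(1)] Cp by (meson reachIn_trans)
    qed
  next
    case (Sub j)
    then show ?thesis using s sub unfolding init_nodes_def by auto
  qed simp
qed

lemma sep_char:
  assumes w: "w \<in> N" "w \<notin> {u,v}" and i: "i \<in> {1,2,3}"
    and s: "s \<in> N0" "s \<noteq> Cp i w" and c: "c \<in> N0" "c \<notin> Cp i ` r_subtree N E {u,v} w"
  shows "reachIn E0 (-{Cp i w}) s c \<longleftrightarrow> s \<notin> Cp i ` r_subtree N E {u,v} w"
proof
  let ?S = "r_subtree N E {u,v} w - {w}"
  have Sc: "?S = {x\<in>N. x \<noteq> w \<and> \<not> reachIn E (-{w}) x u}" using sub_char_u[OF w(1)] w by auto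
  have uS: "u \<notin> ?S" using Sc by auto
  have "adj E v u" using uvE uv by (auto simp: adj_def insert_commute)
  then have "reachIn E (-{w}) v u" using w by (intro reachIn_edge) auto
  then have vS: "v \<notin> ?S" using Sc by auto
  have cl: "\<forall>x\<in>?S. \<forall>z. adj E x z \<longrightarrow> z \<noteq> w \<longrightarrow> z \<in> ?S"
  proof (intro ballI allI impI)
    fix x z assume x: "x \<in> ?S" and z: "adj E x z" "z \<noteq> w"
    have "z \<in> N" using graph_adjD[OF G z(1)] by auto
    moreover have "\<not> reachIn E (-{w}) z u"
    proof
      assume "reachIn E (-{w}) z u"
      moreover have "reachIn E (-{w}) x z" using x z Sc by (intro reachIn_edge) auto
      ultimately have "reachIn E (-{w}) x u" by (rule reachIn_trans[rotated])
      then show False using x Sc by blast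
    qed
    ultimately show "z \<in> ?S" using Sc z by auto
  qed
  assume r: "reachIn E0 (-{Cp i w}) s c"
  show "s \<notin> Cp i ` r_subtree N E {u,v} w"
  proof
    assume "s \<in> Cp i ` r_subtree N E {u,v} w"
    then have "s \<in> Cp i ` ?S" using s by auto
    from closure[OF uS vS cl r this] show False using c by auto
  qed
next
  assume "s \<notin> Cp i ` r_subtree N E {u,v} w"
  then have "reachIn E0 (-{Cp i w}) s Ctr" using reach_Ctr_avoid w i s by auto
  moreover have "reachIn E0 (-{Cp i w}) c Ctr"
  proof (rule reach_Ctr_avoid[OF w i c(1) _ c(2)])
    show "c \<noteq> Cp i w"
    proof
      assume "c = Cp i w"
      moreover have "w \<in> r_subtree N E {u,v} w" using sub_char_u[OF w(1)] w by auto
      ultimately show False using c by auto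
    qed
  qed
  ultimately show "reachIn E0 (-{Cp i w}) s c" by (meson reachIn_sym reachIn_trans)
qed

end

context tset begin

lemma good_sep3:
  assumes w: "w \<in> N" "w \<notin> {u,v}" "card (nbrs E w) = 3" and i: "i \<in> {1,2,3}"
    and lab: "\<forall>z\<in>N. card (nbrs E z) \<le> 1 \<longrightarrow> z \<in> r_subtree N E {u,v} w \<longrightarrow> Cp i z \<in> Lab"
    and l3: "l3 \<in> Lab" "l3 \<notin> range (Cp i)"
  shows "sep3 E0 Lab (Cp i w)"
proof -
  define side where "side a = {x. reachIn E (-{w}) a x}" for a
  have side_ne: "x \<noteq> w" if "a \<in> nbrs E w" "x \<in> side a" for a x
  proof
    assume "x = w"
    have "a \<noteq> w" using that(1) unfolding nbrs_def adj_def by auto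
    then show False using that(2) \<open>x = w\<close> reachIn_ends[of E "-{w}" a w] unfolding side_def by auto
  qed
  have disj: False if "a \<in> nbrs E w" "b \<in> nbrs E w" "a \<noteq> b" "x \<in> side a" "x \<in> side b" for a b x
  proof -
    have "reachIn E (-{w}) a x" "reachIn E (-{w}) b x" using that(4,5) unfolding side_def by auto
    then have "reachIn E (-{w}) a b" using reachIn_sym reachIn_trans by metis
    moreover have "adj E w a" "adj E b w" using that(1,2) adj_sym unfolding nbrs_def by auto
    ultimately show False using acyc_contra[OF A] that(3) by blast
  qed
  obtain a1 a2 a3 where n3: "nbrs E w = {a1,a2,a3}" "a1 \<noteq> a2" "a2 \<noteq> a3" "a1 \<noteq> a3"
    using w(3) card_3_iff by metis
  obtain a b where ab: "a \<in> nbrs E w" "b \<in> nbrs E w" "a \<noteq> b" "u \<notin> side a" "u \<notin> side b"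
  proof -
    consider "u \<notin> side a1" "u \<notin> side a2" | "u \<in> side a1" | "u \<in> side a2" by blast
    then show thesis
    proof cases
      case 1 then show ?thesis using that[of a1 a2] n3 by auto
    next
      case 2
      then have "u \<notin> side a2" "u \<notin> side a3" using disj[of a1 a2 u] disj[of a1 a3 u] n3 by auto
      then show ?thesis using that[of a2 a3] n3 by auto
    next
      case 3
      then have "u \<notin> side a1" "u \<notin> side a3" using disj[of a2 a1 u] disj[of a2 a3 u] n3 by auto
      then show ?thesis using that[of a1 a3] n3 by auto
    qed
  qed
  have sidefacts: "(\<exists>z. z \<in> side a' \<and> Cp i z \<in> Lab) \<and>
     (\<forall>s t. reachIn E0 (-{Cp i w}) s t \<longrightarrow> s \<in> Cp i ` side a' \<longrightarrow> t \<in> Cp i ` side a')"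
    if a': "a' \<in> nbrs E w" "u \<notin> side a'" for a'
  proof
    have wa: "adj E w a'" using a' unfolding nbrs_def by simp
    have aN: "a' \<in> N" using graph_adjD[OF G wa] by auto
    obtain z where z: "reachIn E (-{w}) a' z" "card (nbrs E z) \<le> 1" using leaf_exists[OF G A wa] by auto
    have zN: "z \<in> N" using reach_in_N[OF G z(1) aN] .
    have zs: "z \<in> side a'" using z unfolding side_def by simp
    have "\<not> reachIn E (-{w}) z u"
    proof
      assume "reachIn E (-{w}) z u"
      then have "u \<in> side a'" using z(1) unfolding side_def by (meson mem_Collect_eq reachIn_trans)
      then show False using a' by simp
    qed
    then have "z \<in> r_subtree N E {u,v} w" using sub_char_u[OF w(1)] w zN by auto
    then show "\<exists>z. z \<in> side a' \<and> Cp i z \<in> Lab" using lab zN z zs by blast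
    have vS: "v \<notin> side a'"
    proof
      assume "v \<in> side a'"
      then have r1: "reachIn E (-{w}) a' v" unfolding side_def by simp
      have "adj E v u" using uvE uv by (auto simp: adj_def insert_commute)
      then have "reachIn E (-{w}) v u" using w by (intro reachIn_edge) auto
      then have "reachIn E (-{w}) a' u" using r1 reachIn_trans by metis
      then show False using a' unfolding side_def by simp
    qed
    have cl: "\<forall>x\<in>side a'. \<forall>z. adj E x z \<longrightarrow> z \<noteq> w \<longrightarrow> z \<in> side a'"
    proof (intro ballI allI impI)
      fix x z assume x: "x \<in> side a'" and h: "adj E x z" "z \<noteq> w"
      have "x \<noteq> w" using side_ne[OF a'(1) x] .
      then have "reachIn E (-{w}) x z" using h by (intro reachIn_edge) auto
      then show "z \<in> side a'" using x unfolding side_def by (meson mem_Collect_eq reachIn_trans)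
    qed
    show "\<forall>s t. reachIn E0 (-{Cp i w}) s t \<longrightarrow> s \<in> Cp i ` side a' \<longrightarrow> t \<in> Cp i ` side a'"
      using closure[OF a'(2) vS cl] by blast
  qed
  obtain z1 where z1: "z1 \<in> side a" "Cp i z1 \<in> Lab" using sidefacts[OF ab(1,4)] by blast
  obtain z2 where z2: "z2 \<in> side b" "Cp i z2 \<in> Lab" using sidefacts[OF ab(2,5)] by blast
  have c1: "\<forall>s t. reachIn E0 (-{Cp i w}) s t \<longrightarrow> s \<in> Cp i ` side a \<longrightarrow> t \<in> Cp i ` side a"
    using sidefacts[OF ab(1,4)] by blast
  have c2: "\<forall>s t. reachIn E0 (-{Cp i w}) s t \<longrightarrow> s \<in> Cp i ` side b \<longrightarrow> t \<in> Cp i ` side b"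
    using sidefacts[OF ab(2,5)] by blast
  have n12: "\<not> reachIn E0 (-{Cp i w}) (Cp i z1) (Cp i z2)"
  proof
    assume "reachIn E0 (-{Cp i w}) (Cp i z1) (Cp i z2)"
    then have "Cp i z2 \<in> Cp i ` side a" using c1 z1 by blast
    then have "z2 \<in> side a" by auto
    then show False using disj[OF ab(1,2,3) _ z2(1)] by blast
  qed
  have n13: "\<not> reachIn E0 (-{Cp i w}) (Cp i z1) l3"
    using c1 z1 l3 by blast
  have n23: "\<not> reachIn E0 (-{Cp i w}) (Cp i z2) l3"
    using c2 z2 l3 by blast
  have ne: "Cp i z1 \<noteq> Cp i w" "Cp i z2 \<noteq> Cp i w" "l3 \<noteq> Cp i w"
    using side_ne[OF ab(1) z1(1)] side_ne[OF ab(2) z2(1)] l3 by auto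
  show ?thesis unfolding sep3_def using z1 z2 l3 ne n12 n13 n23 by blast
qed

end


lemma path_in_N: "is_graph N E \<Longrightarrow> is_path E p \<Longrightarrow> hd p \<in> N \<Longrightarrow> set p \<subseteq> N"
proof (induction p)
  case Nil then show ?case by simp
next
  case (Cons x p)
  show ?case
  proof (cases p)
    case Nil then show ?thesis using Cons by simp
  next
    case (Cons y p')
    then have "adj E x y" "is_path E p" using Cons.prems(2) by (auto simp: is_path_Cons)
    then have "y \<in> N" using graph_adjD[OF Cons.prems(1)] by auto
    then show ?thesis using Cons.IH[OF Cons.prems(1) \<open>is_path E p\<close>] Cons Cons.prems by auto
  qed
qed

lemma pte_suffix:
  assumes "path_to_edge E (q1 @ x # q2) x' r"
  shows "path_to_edge E (x # q2) x r"
proof -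
  have "is_path E (x # q2)" using assms is_path_append_right unfolding path_to_edge_def by blast
  moreover have "last (x # q2) \<in> r" using assms unfolding path_to_edge_def by simp
  moreover have "set (butlast (x # q2)) \<subseteq> set (butlast (q1 @ x # q2))"
    by (simp add: butlast_append)
  ultimately show ?thesis using assms unfolding path_to_edge_def by auto
qed

context tset begin

lemma leaf_sub:
  assumes w: "w \<in> N" "nbrs E w = {a}"
  shows "r_subtree N E {u,v} w = {w}"
proof -
  have all: "reachIn E (-{w}) x c" if "x \<in> N" "x \<noteq> w" "c \<in> {u,v}" "c \<noteq> w" for x c
  proof -
    have "reachIn E UNIV x c" using C that uvN unfolding conn_def by auto
    then show ?thesis using leaf_avoid[OF w(2)] that by blast
  qed
  show ?thesis
  proof (cases "w = u")
    case False
    then show ?thesis using sub_char_u[OF w(1) False] all w(1) by auto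
  next
    case True
    then have "w \<noteq> v" using uv by simp
    then show ?thesis using sub_char_v[OF w(1)] all w(1) by auto
  qed
qed

lemma upward:
  assumes x: "x \<in> N" and p: "path_to_edge E p x {u,v}" and z: "z \<in> set p"
  shows "r_subtree N E {u,v} x \<subseteq> r_subtree N E {u,v} z"
proof
  fix x' assume "x' \<in> r_subtree N E {u,v} x"
  then obtain q where q: "x' \<in> N" "path_to_edge E q x' {u,v}" "x \<in> set q" unfolding r_subtree_def by auto
  obtain q1 q2 where qq: "q = q1 @ x # q2" using q(3) by (meson split_list)
  have "path_to_edge E (x # q2) x {u,v}" using pte_suffix[of E q1 x q2 x' "{u,v}"] q(2) qq by simp
  then have "x # q2 = p" using pte_unique[OF A _ _ p] uvE uv by (simp add: adj_def)
  then have "z \<in> set q" using z qq by auto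
  then show "x' \<in> r_subtree N E {u,v} z" using q unfolding r_subtree_def by auto
qed

end


definition Cs :: "'v set \<Rightarrow> 'v set \<Rightarrow> 'v set \<Rightarrow> nat \<Rightarrow> 'v set" where
  "Cs C1 C2 C3 i = (if i = 1 then C1 else if i = 2 then C2 else C3)"

definition ix :: "'v set \<Rightarrow> 'v set \<Rightarrow> 'v set \<Rightarrow> 'v \<Rightarrow> nat" where
  "ix C1 C2 C3 e = (if e \<in> C1 then 1 else if e \<in> C2 then 2 else 3)"

lemma ref_eq: "ref_label L C1 C2 C3 e = Cp (ix C1 C2 C3 e) (L e)"
  by (simp add: ref_label_def ix_def)

lemma ix_in: "ix C1 C2 C3 e \<in> {1,2,3}"
  by (simp add: ix_def)

lemma ix_Cs: "e \<in> C1 \<union> C2 \<union> C3 \<Longrightarrow> e \<in> Cs C1 C2 C3 (ix C1 C2 C3 e)"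
  by (auto simp: ix_def Cs_def)

lemma ix_uniq: "C1 \<inter> C2 = {} \<Longrightarrow> C1 \<inter> C3 = {} \<Longrightarrow> C2 \<inter> C3 = {} \<Longrightarrow> i \<in> {1,2,3} \<Longrightarrow>
    e \<in> Cs C1 C2 C3 i \<Longrightarrow> ix C1 C2 C3 e = i"
  by (auto simp: ix_def Cs_def)

lemma Cs_in: "i \<in> {1,2,3} \<Longrightarrow> Cs C1 C2 C3 i \<in> {C1,C2,C3}"
  by (auto simp: Cs_def)

lemma meets_one:
  assumes "S \<subseteq> C1 \<union> C2 \<union> C3"
    and "\<not> ((S \<inter> C1 \<noteq> {} \<and> S \<inter> C2 \<noteq> {}) \<or> (S \<inter> C1 \<noteq> {} \<and> S \<inter> C3 \<noteq> {}) \<or> (S \<inter> C2 \<noteq> {} \<and> S \<inter> C3 \<noteq> {}))"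
  shows "\<exists>i\<in>{1,2,3}. S \<subseteq> Cs C1 C2 C3 i"
proof -
  have "S \<subseteq> C1 \<or> S \<subseteq> C2 \<or> S \<subseteq> C3" using assms by blast
  then consider "S \<subseteq> C1" | "S \<subseteq> C2" | "S \<subseteq> C3" by blast
  then show ?thesis
  proof cases
    case 1 then show ?thesis by (intro bexI[of _ 1]) (simp_all add: Cs_def)
  next
    case 2 then show ?thesis by (intro bexI[of _ 2]) (simp_all add: Cs_def)
  next
    case 3 then show ?thesis by (intro bexI[of _ 3]) (simp_all add: Cs_def)
  qed
qed
theorem lemma12:
  fixes V :: "'v set" and f :: "'v set \<Rightarrow> nat"
    and N :: "'n set" and E :: "'n set set" and L :: "'v \<Rightarrow> 'n"
    and u v :: 'n and C1 C2 C3 :: "'v set"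
    and R :: "'n set" and N' :: "'n rnode set" and E' :: "'n rnode set set"
  assumes "finite V"
    and "connectivity_function V f"
    and "branch_decomposition V N E L"
    and "{u, v} \<in> E"
    and "global_T_improvement V f N E L u v C1 C2 C3"
    and "R = edit_set V N E L {u, v} C1 C2 C3"
    and "refinement V N E L u v C1 C2 C3 N' E'"
  shows "(\<forall>w\<in>R. degree E w = 3)
    \<and> (\<forall>x\<in>R. \<forall>y\<in>R. \<exists>p. path_betw E p x y \<and> set p \<subseteq> R)
    \<and> (\<exists>r'\<in>E'. \<forall>w\<in>N - R. \<exists>w'\<in>N'.
          subtree_leaves N E L V {u, v} w = subtree_leaves N' E' (ref_label L C1 C2 C3) V r' w')"
proof -
  have tree: "is_tree N E" and deg: "\<forall>x\<in>N. degree E x = 1 \<or> degree E x = 3"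
    and bij: "bij_betw L V {x \<in> N. degree E x = 1}"
    using assms(3) unfolding branch_decomposition_def by auto
  have G: "is_graph N E" using tree unfolding is_tree_def by auto
  have Ac: "acyc E" using tree_acyc[OF tree] .
  have Cn: "conn N E" using tree_conn[OF tree] .
  have TI: "T_improvement V f E L u v C1 C2 C3" using assms(5) unfolding global_T_improvement_def by auto
  then have uv: "u \<noteq> v" and MI: "min_improvement V f (closer_leaves E L V u v) C1 C2 C3"
    unfolding T_improvement_def by auto
  interpret T: tset N E u v using G Ac Cn assms(4) uv by unfold_locales
  define W where "W = closer_leaves E L V u v"
  have IM: "improvement V f W C1 C2 C3" using MI unfolding W_def min_improvement_def by auto
  have disj: "C1 \<inter> C2 = {}" "C1 \<inter> C3 = {}" "C2 \<inter> C3 = {}" and cover: "C1 \<union> C2 \<union> C3 = V"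
    using IM unfolding improvement_def by auto
  have fC: "\<forall>C\<in>{C1,C2,C3}. f (C \<inter> W) < f W \<and> f (C \<inter> (V - W)) < f W"
    using IM unfolding improvement_def by auto
  have WV: "W \<subseteq> V" unfolding W_def closer_leaves_def by auto
  have "\<forall>X. X \<subseteq> V \<longrightarrow> f X = f (V - X)" using assms(2) unfolding connectivity_function_def by blast
  then have fsym: "f W = f (V - W)" using WV by blast
  define Ts where "Ts w = subtree_leaves N E L V {u,v} w" for w
  have Ts_eq: "Ts w = {e \<in> V. L e \<in> r_subtree N E {u,v} w}" for w
    unfolding Ts_def subtree_leaves_def by simp
  define M2 where "M2 S = ((S \<inter> C1 \<noteq> {} \<and> S \<inter> C2 \<noteq> {}) \<or> (S \<inter> C1 \<noteq> {} \<and> S \<inter> C3 \<noteq> {}) \<or>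
      (S \<inter> C2 \<noteq> {} \<and> S \<inter> C3 \<noteq> {}))" for S
  have Rmem: "w \<in> R \<longleftrightarrow> w \<in> N \<and> M2 (Ts w)" for w
    unfolding assms(6) edit_set_def Ts_def M2_def Let_def by simp
  have LN: "L e \<in> N \<and> degree E (L e) = 1" if "e \<in> V" for e
    using bij that unfolding bij_betw_def by auto
  have Linj: "inj_on L V" using bij bij_betw_def by auto
  have leafL: "\<exists>e\<in>V. L e = z" if "z \<in> N" "degree E z = 1" for z
  proof -
    have "z \<in> L ` V" using bij that unfolding bij_betw_def by simp
    then show ?thesis by blast
  qed
  have M2_two: "\<exists>e1 e2. e1 \<in> S \<and> e2 \<in> S \<and> e1 \<noteq> e2" if "M2 S" for S
    using disj that unfolding M2_def by blast
  have TsV: "Ts w \<subseteq> V" for w using Ts_eq by auto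
  have one: "\<exists>i\<in>{1,2,3}. S \<subseteq> Cs C1 C2 C3 i" if "S \<subseteq> V" "\<not> M2 S" for S
    using meets_one[of S C1 C2 C3] that cover unfolding M2_def by auto
  have leafsub: "r_subtree N E {u,v} w = {w}" if wh: "w \<in> N" "degree E w = 1" for w
  proof -
    obtain a where "nbrs E w = {a}" using deg1_nbrs wh(2) by metis
    then show ?thesis using T.leaf_sub wh(1) by auto
  qed

  have P1: "\<forall>w\<in>R. degree E w = 3"
  proof
    fix w assume w: "w \<in> R"
    then have wN: "w \<in> N" "M2 (Ts w)" using Rmem by auto
    show "degree E w = 3"
    proof (rule ccontr)
      assume "degree E w \<noteq> 3"
      then have "degree E w = 1" using deg wN by auto
      then have "r_subtree N E {u,v} w = {w}" using leafsub wN by auto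
      then have "Ts w \<subseteq> {e \<in> V. L e = w}" using Ts_eq by auto
      then show False using M2_two[OF wN(2)] Linj unfolding inj_on_def by blast
    qed
  qed

  have toR: "\<exists>c\<in>{u,v}. c \<in> R \<and> reachIn E R x c" if x: "x \<in> R" for x
  proof -
    have xN: "x \<in> N" using x Rmem by auto
    obtain p where p: "path_to_edge E p x {u,v}" using pte_exists[OF Cn xN T.uvN(1), of "{u,v}"] by auto
    have pN: "set p \<subseteq> N" using path_in_N[OF G] p xN unfolding path_to_edge_def by auto
    have pR: "set p \<subseteq> R"
    proof
      fix z assume z: "z \<in> set p"
      have "r_subtree N E {u,v} x \<subseteq> r_subtree N E {u,v} z" using T.upward[OF xN p z] .
      then have "Ts x \<subseteq> Ts z" using Ts_eq by auto
      moreover have "M2 (Ts x)" using x Rmem by auto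
      ultimately have "M2 (Ts z)" unfolding M2_def by blast
      then show "z \<in> R" using Rmem z pN by auto
    qed
    have "reachIn E (set p) x (last p)" using path_reach[of E p] p unfolding path_to_edge_def by auto
    then have "reachIn E R x (last p)" using reachIn_mono[OF _ order_refl pR] by blast
    moreover have "last p \<in> {u,v}" "last p \<in> R"
      using p pR path_last_in unfolding path_to_edge_def by auto
    ultimately show ?thesis by blast
  qed
  have P2: "\<forall>x\<in>R. \<forall>y\<in>R. \<exists>p. path_betw E p x y \<and> set p \<subseteq> R"
  proof (intro ballI)
    fix x y assume x: "x \<in> R" and y: "y \<in> R"
    obtain cx where cx: "cx \<in> {u,v}" "cx \<in> R" "reachIn E R x cx" using toR[OF x] by auto
    obtain cy where cy: "cy \<in> {u,v}" "cy \<in> R" "reachIn E R y cy" using toR[OF y] by auto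
    have "reachIn E R cx cy"
    proof (cases "cx = cy")
      case False
      then have "adj E cx cy" using cx cy assms(4) uv by (auto simp: adj_def insert_commute)
      then show ?thesis using cx cy by (intro reachIn_edge)
    qed simp
    then have "reachIn E R x cy" using cx(3) reachIn_trans by metis
    moreover have "reachIn E R cy y" using cy(3) reachIn_sym by metis
    ultimately have "reachIn E R x y" using reachIn_trans by metis
    then show "\<exists>p. path_betw E p x y \<and> set p \<subseteq> R" using reach_path[of E R x y] x by blast
  qed

  have WTu: "W \<subseteq> Ts u"
  proof
    fix e assume e: "e \<in> W"
    then have eV: "e \<in> V" using WV by auto
    obtain p where p: "path_betw E p (L e) u" and pmin: "\<forall>q. path_betw E q (L e) v \<longrightarrow> length p < length q"
      using e unfolding W_def closer_leaves_def by auto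
    have "L e \<in> r_subtree N E {u,v} u"
    proof (rule ccontr)
      assume "L e \<notin> r_subtree N E {u,v} u"
      then have h: "L e \<noteq> u" "reachIn E (-{u}) (L e) v" using T.sub_char_v[OF T.uvN(1) uv] LN[OF eV] by auto
      obtain q where q: "path_betw E q (L e) v" "set q \<subseteq> -{u}" using reach_path[OF h(2)] h(1) by auto
      have qne: "q \<noteq> []" using q unfolding path_betw_def is_path_def by auto
      have "adj E v u" using assms(4) uv by (auto simp: adj_def insert_commute)
      then have "is_path E (q @ [u])" using is_path_snoc[of E q u] q unfolding path_betw_def by auto
      moreover have "hd (q @ [u]) = hd p" "last (q @ [u]) = last p" using q p qne unfolding path_betw_def by auto
      ultimately have "q @ [u] = p" using path_unique[OF Ac] p unfolding path_betw_def by blast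
      then show False using pmin q by fastforce
    qed
    then show "e \<in> Ts u" using Ts_eq eV by auto
  qed
  have WTv: "V - W \<subseteq> Ts v"
  proof
    fix e assume e: "e \<in> V - W"
    then have eV: "e \<in> V" by auto
    have "L e \<in> r_subtree N E {u,v} v"
    proof (rule ccontr)
      assume "L e \<notin> r_subtree N E {u,v} v"
      then have h: "L e \<noteq> v" "reachIn E (-{v}) (L e) u" using T.sub_char_u[OF T.uvN(2)] uv LN[OF eV] by auto
      obtain p where p: "path_betw E p (L e) u" "set p \<subseteq> -{v}" using reach_path[OF h(2)] h(1) by auto
      have pne: "p \<noteq> []" using p unfolding path_betw_def is_path_def by auto
      have "adj E u v" using assms(4) uv by (auto simp: adj_def)
      then have pv: "is_path E (p @ [v])" using is_path_snoc[of E p v] p unfolding path_betw_def by auto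
      have "\<forall>q. path_betw E q (L e) v \<longrightarrow> length p < length q"
      proof (intro allI impI)
        fix q assume q: "path_betw E q (L e) v"
        have "hd (p @ [v]) = hd q" "last (p @ [v]) = last q" using q p pne unfolding path_betw_def by auto
        then have "p @ [v] = q" using path_unique[OF Ac pv] q unfolding path_betw_def by blast
        then show "length p < length q" by auto
      qed
      then have "e \<in> W" using p eV unfolding W_def closer_leaves_def by auto
      then show False using e by auto
    qed
    then show "e \<in> Ts v" using Ts_eq eV by auto
  qed
  have uR: "u \<in> R"
  proof (rule ccontr)
    assume "u \<notin> R"
    then have "\<not> M2 (Ts u)" using Rmem T.uvN by auto
    then obtain i where i: "i \<in> {1,2,3}" "Ts u \<subseteq> Cs C1 C2 C3 i" using one[OF TsV] by blast
    then have "Cs C1 C2 C3 i \<inter> W = W" using WTu by auto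
    moreover have "Cs C1 C2 C3 i \<in> {C1,C2,C3}" using i(1) by (rule Cs_in)
    then have "f (Cs C1 C2 C3 i \<inter> W) < f W" using fC by blast
    ultimately show False by simp
  qed
  have vR: "v \<in> R"
  proof (rule ccontr)
    assume "v \<notin> R"
    then have "\<not> M2 (Ts v)" using Rmem T.uvN by auto
    then obtain i where i: "i \<in> {1,2,3}" "Ts v \<subseteq> Cs C1 C2 C3 i" using one[OF TsV] by blast
    then have "Cs C1 C2 C3 i \<inter> (V - W) = V - W" using WTv by auto
    moreover have "Cs C1 C2 C3 i \<in> {C1,C2,C3}" using i(1) by (rule Cs_in)
    then have "f (Cs C1 C2 C3 i \<inter> (V - W)) < f W" using fC by blast
    ultimately show False using fsym by simp
  qed

  have Wne: "W \<noteq> {}"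
  proof
    assume "W = {}"
    moreover have "f (C1 \<inter> W) < f W" using fC by blast
    ultimately show False by simp
  qed
  then obtain e0 where e0: "e0 \<in> W" by auto
  define i0 where "i0 = ix C1 C2 C3 e0"
  have e0C: "e0 \<in> Cs C1 C2 C3 i0" using ix_Cs[of e0 C1 C2 C3] e0 WV cover unfolding i0_def by auto
  have "\<not> W \<subseteq> Cs C1 C2 C3 i0"
  proof
    assume "W \<subseteq> Cs C1 C2 C3 i0"
    then have "Cs C1 C2 C3 i0 \<inter> W = W" by auto
    moreover have "Cs C1 C2 C3 i0 \<in> {C1,C2,C3}" unfolding i0_def by (rule Cs_in[OF ix_in])
    then have "f (Cs C1 C2 C3 i0 \<inter> W) < f W" using fC by blast
    ultimately show False by simp
  qed
  then obtain e1 where e1: "e1 \<in> W" "e1 \<notin> Cs C1 C2 C3 i0" by auto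
  have e1C: "e1 \<in> Cs C1 C2 C3 (ix C1 C2 C3 e1)" using ix_Cs[of e1 C1 C2 C3] e1 WV cover by auto
  have i01: "ix C1 C2 C3 e1 \<noteq> ix C1 C2 C3 e0" using e1 e1C unfolding i0_def by auto
  have e01V: "e0 \<in> V" "e1 \<in> V" using e0 e1 WV by auto

  define Lab where "Lab = ref_label L C1 C2 C3 ` V"
  have st: "(reduce_step Lab)\<^sup>*\<^sup>* (init_nodes N, init_edges E u v) (N', E')"
    using assms(7) unfolding refinement_def Lab_def Let_def by auto
  define Good where "Good = {Cp i w | w i. w \<in> N \<and> w \<notin> R \<and> degree E w = 3 \<and> i \<in> {1,2,3} \<and>
      Ts w \<subseteq> Cs C1 C2 C3 i}"
  have Lab0: "\<forall>l\<in>Lab. l \<in> init_nodes N \<and> card (nbrs (init_edges E u v) l) \<le> 1"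
  proof
    fix l assume "l \<in> Lab"
    then obtain e where e: "e \<in> V" "l = Cp (ix C1 C2 C3 e) (L e)" unfolding Lab_def ref_eq by auto
    obtain a where a: "nbrs E (L e) = {a}" using LN[OF e(1)] deg1_nbrs by metis
    have "L e \<in> N" using LN[OF e(1)] by simp
    then show "l \<in> init_nodes N \<and> card (nbrs (init_edges E u v) l) \<le> 1"
      using T.in_N0(1)[OF ix_in[of C1 C2 C3 e] \<open>L e \<in> N\<close>] T.label_deg[OF a ix_in[of C1 C2 C3 e]] e(2) by simp
  qed
  have Good0: "Good \<subseteq> init_nodes N" unfolding Good_def using T.in_N0(1) by auto
  have Goodsep: "\<forall>y\<in>Good. sep3 (init_edges E u v) Lab y"
  proof
    fix y assume "y \<in> Good"
    then obtain w i where y: "y = Cp i w" "w \<in> N" "w \<notin> R" "degree E w = 3" "i \<in> {1,2,3}"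
      "Ts w \<subseteq> Cs C1 C2 C3 i" unfolding Good_def by auto
    have wuv: "w \<notin> {u,v}" using y uR vR by auto
    have lab: "\<forall>z\<in>N. card (nbrs E z) \<le> 1 \<longrightarrow> z \<in> r_subtree N E {u,v} w \<longrightarrow> Cp i z \<in> Lab"
    proof (intro ballI impI)
      fix z assume z: "z \<in> N" "card (nbrs E z) \<le> 1" "z \<in> r_subtree N E {u,v} w"
      then have "degree E z = 1" using deg unfolding degree_def by fastforce
      then obtain e where e: "e \<in> V" "L e = z" using leafL z by blast
      then have "e \<in> Ts w" using Ts_eq z by auto
      then have "ix C1 C2 C3 e = i" using ix_uniq[OF disj y(5)] y(6) by auto
      then show "Cp i z \<in> Lab" using e unfolding Lab_def ref_eq by force
    qed
    obtain e3 where e3: "e3 \<in> V" "ix C1 C2 C3 e3 \<noteq> i" using i01 e01V by metis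
    have l3: "ref_label L C1 C2 C3 e3 \<in> Lab" "ref_label L C1 C2 C3 e3 \<notin> range (Cp i)"
      using e3 unfolding Lab_def ref_eq by auto
    show "sep3 (init_edges E u v) Lab y"
      using T.good_sep3[OF y(2) wuv _ y(5) lab l3] y(1,4) unfolding degree_def by simp
  qed
  have INV: "Inv Lab (init_nodes N) (init_edges E u v) N' E' \<and> Good \<subseteq> N'"
    by (rule reduce_inv[OF st T.G0_graph T.G0_acyc T.G0_conn Lab0 Good0 Goodsep])
  have G': "is_graph N' E'" and A': "acyc E'" and N'0: "N' \<subseteq> init_nodes N"
    and RR: "\<And>Y p q. Y \<subseteq> N' \<Longrightarrow> p \<in> N' \<Longrightarrow> q \<in> N' \<Longrightarrow>
        (reachIn E' (-Y) p q \<longleftrightarrow> reachIn (init_edges E u v) (-Y) p q)"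
    and LabN': "\<forall>l\<in>Lab. l \<in> N'" and GoodN': "Good \<subseteq> N'"
    using INV unfolding Inv_def by auto
  have C': "conn N' E'"
    unfolding conn_def
  proof (intro ballI)
    fix p q assume "p \<in> N'" "q \<in> N'"
    then show "reachIn E' UNIV p q" using RR[of "{}" p q] T.G0_conn N'0 unfolding conn_def by auto
  qed
  have "\<exists>r'\<in>E'. \<forall>i. \<not> r' \<subseteq> range (Cp i)"
  proof (rule ccontr)
    assume "\<not> (\<exists>r'\<in>E'. \<forall>i. \<not> r' \<subseteq> range (Cp i))"
    then have allc: "\<forall>r'\<in>E'. \<exists>i. r' \<subseteq> range (Cp i)" by blast
    let ?la = "ref_label L C1 C2 C3 e0" and ?lb = "ref_label L C1 C2 C3 e1"
    have "?la \<in> N'" "?lb \<in> N'" using LabN' e01V unfolding Lab_def by auto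
    then have r: "reachIn E' UNIV ?la ?lb" using C' unfolding conn_def by auto
    have "?lb \<in> range (Cp i0)"
    proof (rule reachIn_closed[OF r])
      show "?la \<in> range (Cp i0)" unfolding ref_eq i0_def by simp
      fix s t assume h: "adj E' s t" "s \<in> UNIV" "t \<in> UNIV" "s \<in> range (Cp i0)"
      obtain k where k: "{s,t} \<subseteq> range (Cp k)" using allc h(1) unfolding adj_def by blast
      then have "k = i0" using h(4) by auto
      then show "t \<in> range (Cp i0)" using k by auto
    qed
    then show False using i01 unfolding ref_eq i0_def by auto
  qed
  then obtain r' where r': "r' \<in> E'" "\<forall>i. \<not> r' \<subseteq> range (Cp i)" by blast
  have P3: "\<forall>w\<in>N - R. \<exists>w'\<in>N'.
      subtree_leaves N E L V {u, v} w = subtree_leaves N' E' (ref_label L C1 C2 C3) V r' w'"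
  proof
    fix w assume w: "w \<in> N - R"
    then have wN: "w \<in> N" and nM: "\<not> M2 (Ts w)" using Rmem by auto
    obtain i where i: "i \<in> {1,2,3}" "Ts w \<subseteq> Cs C1 C2 C3 i" using one[OF TsV nM] by blast
    have wuv: "w \<notin> {u,v}" using w uR vR by auto
    define y where "y = Cp i w"
    have yN': "y \<in> N'"
    proof (cases "degree E w = 3")
      case True
      then have "y \<in> Good" using w i unfolding Good_def y_def by auto
      then show ?thesis using GoodN' by auto
    next
      case False
      then have d1: "degree E w = 1" using deg wN by auto
      then obtain e where e: "e \<in> V" "L e = w" using leafL wN by blast
      have "e \<in> Ts w" using Ts_eq leafsub[OF wN d1] e by auto
      then have "ix C1 C2 C3 e = i" using ix_uniq[OF disj i(1)] i(2) by auto
      then have "ref_label L C1 C2 C3 e = y" using e unfolding ref_eq y_def by simp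
      then show ?thesis using LabN' e unfolding Lab_def by force
    qed
    obtain c' where c': "c' \<in> r'" "c' \<notin> range (Cp i)" using r' by blast
    have "\<exists>x1 x2. r' = {x1,x2} \<and> x1 \<noteq> x2 \<and> x1 \<in> N' \<and> x2 \<in> N'"
      using G' r'(1) unfolding is_graph_def by blast
    then obtain x1 x2 where xx: "r' = {x1,x2}" "x1 \<noteq> x2" "x1 \<in> N'" "x2 \<in> N'" by blast
    define d' where "d' = (if c' = x1 then x2 else x1)"
    have rcd: "r' = {c', d'}" "c' \<noteq> d'" using xx c'(1) unfolding d'_def by auto
    have c'N: "c' \<in> N'" using xx c'(1) by auto
    have cy: "c' \<noteq> y" using c' unfolding y_def by auto
    have sub': "r_subtree N' E' r' y = {x \<in> N'. x = y \<or> \<not> reachIn E' (-{y}) x c'}"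
      using r_subtree_char[OF G' A' C' _ rcd(2) yN' cy] r'(1) rcd(1) by simp
    have wsub: "w \<in> r_subtree N E {u,v} w" using T.sub_char_u[OF wN] wuv wN by auto
    have key: "ref_label L C1 C2 C3 e \<in> r_subtree N' E' r' y \<longleftrightarrow> e \<in> Ts w" if e: "e \<in> V" for e
    proof -
      let ?l = "ref_label L C1 C2 C3 e"
      have lN': "?l \<in> N'" using LabN' e unfolding Lab_def by auto
      have "?l \<in> r_subtree N' E' r' y \<longleftrightarrow> ?l = y \<or> \<not> reachIn E' (-{y}) ?l c'" using sub' lN' by auto
      also have "\<dots> \<longleftrightarrow> ?l = y \<or> \<not> reachIn (init_edges E u v) (-{y}) ?l c'"
        using RR[of "{y}" ?l c'] yN' lN' c'N by auto
      also have "\<dots> \<longleftrightarrow> ?l \<in> Cp i ` r_subtree N E {u,v} w"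
      proof (cases "?l = y")
        case True then show ?thesis using wsub unfolding y_def by auto
      next
        case False
        have "reachIn (init_edges E u v) (-{Cp i w}) ?l c' \<longleftrightarrow> ?l \<notin> Cp i ` r_subtree N E {u,v} w"
          using T.sep_char[OF wN wuv i(1)] lN' N'0 False c'N c'(2) unfolding y_def by blast
        then show ?thesis using False unfolding y_def by auto
      qed
      also have "\<dots> \<longleftrightarrow> e \<in> Ts w"
      proof
        assume "?l \<in> Cp i ` r_subtree N E {u,v} w"
        then have "L e \<in> r_subtree N E {u,v} w" unfolding ref_eq by auto
        then show "e \<in> Ts w" using Ts_eq e by auto
      next
        assume h: "e \<in> Ts w"
        then have "ix C1 C2 C3 e = i" using ix_uniq[OF disj i(1)] i(2) by auto
        moreover have "L e \<in> r_subtree N E {u,v} w" using h Ts_eq by auto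
        ultimately show "?l \<in> Cp i ` r_subtree N E {u,v} w" unfolding ref_eq by auto
      qed
      finally show ?thesis .
    qed
    have "subtree_leaves N E L V {u, v} w = subtree_leaves N' E' (ref_label L C1 C2 C3) V r' y"
      unfolding subtree_leaves_def using key Ts_eq by auto
    then show "\<exists>w'\<in>N'. subtree_leaves N E L V {u, v} w = subtree_leaves N' E' (ref_label L C1 C2 C3) V r' w'"
      using yN' by blast
  qed
  show ?thesis using P1 P2 P3 r'(1) by blast
qed


end
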